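(* Let $M=I\times F_1\times F_2\times F_3$ with metric $g=-dt^2\oplus\phi^{2p_1}g_{F_1}\oplus\phi^{2p_2}g_{F_2}\oplus\phi^{2p_3}g_{F_3}$, where $I\subset\mathbb{R}$ is an open interval, $\phi:I\to(0,\infty)$ is smooth, $p_1,p_2,p_3\in\mathbb{R}$, and each $(F_i,g_{F_i})$ is a one-dimensional Riemannian manifold; let $\zeta=p_1+p_2+p_3$, $\eta=p_1^2+p_2^2+p_3^2$, and let $\overline\nabla$ be the semi-symmetric metric connection determined by $P=\frac{\partial}{\partial t}$. Then $(M,\overline\nabla)$ has constant scalar curvature $\overline S$ if and only if one of the following holds (with constants $c_0,c_1,c_2$): (1) $\zeta=\eta=0$ and $\overline S=-6$; (2) $\zeta=0$, $\eta\neq0$, and either $\overline S+6=0$ and $\phi$ is constant, or $\overline S+6<0$ and $\phi=c_0e^{\pm\sqrt{-\frac{\overline S+6}{\eta}}\,t}$ (there are no solutions with $\overline S+6>0$); (3) $\zeta\neq0$ and (3a) if $\overline S+6<\frac{9\zeta^2}{\eta+\zeta^2}$: $\phi=\left(c_1e^{\frac{3+\sqrt{9-\frac{(\overline S+6)(\eta+\zeta^2)}{\zeta^2}}}{2}t}+c_2e^{\frac{3-\sqrt{9-\frac{(\overline S+6)(\eta+\zeta^2)}{\zeta^2}}}{2}t}\right)^{\frac{2\zeta}{\eta+\zeta^2}}$; (3b) if $\overline S+6=\frac{9\zeta^2}{\eta+\zeta^2}$: $\phi=\left(c_1e^{\frac32t}+c_2te^{\frac32t}\right)^{\frac{2\zeta}{\eta+\zeta^2}}$;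 (3c) if $\overline S+6>\frac{9\zeta^2}{\eta+\zeta^2}$: $\phi=\left(c_1e^{\frac32t}\cos\left(\frac{\sqrt{-9+\frac{(\overline S+6)(\eta+\zeta^2)}{\zeta^2}}}{2}t\right)+c_2e^{\frac32t}\sin\left(\frac{\sqrt{-9+\frac{(\overline S+6)(\eta+\zeta^2)}{\zeta^2}}}{2}t\right)\right)^{\frac{2\zeta}{\eta+\zeta^2}}$.
   Context: $\nabla$ is the Levi-Civita connection of $g$, $\pi(X)=g(X,P)$, and $\overline\nabla_XY=\nabla_XY+\pi(Y)X-g(X,Y)P$. Conventions: $\overline R(X,Y)Z=\overline\nabla_X\overline\nabla_YZ-\overline\nabla_Y\overline\nabla_XZ-\overline\nabla_{[X,Y]}Z$, $\overline{\mathrm{Ric}}(X,Y)=\sum_k\varepsilon_kg(\overline R(X,E_k)Y,E_k)$, $\overline S=\sum_k\varepsilon_k\overline{\mathrm{Ric}}(E_k,E_k)$ for a local orthonormal frame $(E_k)$, $\varepsilon_k=g(E_k,E_k)$. *)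

theory Defs
  imports "HOL-Analysis.Analysis"
begin

text \<open>Local coordinate calculus on an open subset of R^4 (coordinates x$0 = t, x$1, x$2, x$3).
A metric is given by its components g x i j = g(d_i, d_j) at the point x; a vector field
by its components.  Coordinate vector fields commute, so [d_i,d_j] = 0.\<close>

type_synonym metric4 = "real^4 \<Rightarrow> 4 \<Rightarrow> 4 \<Rightarrow> real"

definition pd :: "(real^4 \<Rightarrow> real) \<Rightarrow> 4 \<Rightarrow> real^4 \<Rightarrow> real" where
  "pd f i x = deriv (\<lambda>s. f (x + s *\<^sub>R axis i 1)) 0"

definition gmat :: "metric4 \<Rightarrow> real^4 \<Rightarrow> real^4^4" where
  "gmat g x = (\<chi> i j. g x i j)"

definition ginv :: "metric4 \<Rightarrow> real^4 \<Rightarrow> 4 \<Rightarrow> 4 \<Rightarrow> real" where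
  "ginv g x i j = matrix_inv (gmat g x) $ i $ j"

text \<open>Christoffel symbols of the Levi-Civita connection: nabla_{d_i} d_j = sum_k Gamma k i j d_k.\<close>
definition christoffel :: "metric4 \<Rightarrow> real^4 \<Rightarrow> 4 \<Rightarrow> 4 \<Rightarrow> 4 \<Rightarrow> real" where
  "christoffel g x k i j = (1/2) * (\<Sum>l\<in>UNIV. ginv g x k l *
      (pd (\<lambda>y. g y j l) i x + pd (\<lambda>y. g y i l) j x - pd (\<lambda>y. g y i j) l x))"

text \<open>Semi-symmetric metric connection
  nablabar_X Y = nabla_X Y + pi(Y) X - g(X,Y) P, with pi(Y) = g(Y,P):
  nablabar_{d_i} d_j = sum_k ssm_conn k i j d_k.\<close>
definition ssm_conn :: "metric4 \<Rightarrow> (real^4 \<Rightarrow> 4 \<Rightarrow> real) \<Rightarrow> real^4 \<Rightarrow> 4 \<Rightarrow> 4 \<Rightarrow> 4 \<Rightarrow> real" where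
  "ssm_conn g P x k i j =
     christoffel g x k i j
     + (\<Sum>l\<in>UNIV. g x j l * P x l) * (if k = i then 1 else 0)
     - g x i j * P x k"

text \<open>Curvature Rbar(X,Y)Z = nablabar_X nablabar_Y Z - nablabar_Y nablabar_X Z - nablabar_[X,Y] Z,
  on coordinate fields: Rbar(d_i,d_j)d_k = sum_l ssm_curv l i j k d_l.\<close>
definition ssm_curv :: "metric4 \<Rightarrow> (real^4 \<Rightarrow> 4 \<Rightarrow> real) \<Rightarrow> real^4 \<Rightarrow> 4 \<Rightarrow> 4 \<Rightarrow> 4 \<Rightarrow> 4 \<Rightarrow> real" where
  "ssm_curv g P x l i j k =
     pd (\<lambda>y. ssm_conn g P y l j k) i x - pd (\<lambda>y. ssm_conn g P y l i k) j x
     + (\<Sum>m\<in>UNIV. ssm_conn g P x m j k * ssm_conn g P x l i m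
                 - ssm_conn g P x m i k * ssm_conn g P x l j m)"

text \<open>Ricci tensor Ricbar(X,Y) = sum_k eps_k g(Rbar(X,E_k)Y,E_k) = trace of Z |-> Rbar(X,Z)Y,
  in coordinates Ricbar_{ij} = sum_k Rbar^k_{ikj}.\<close>
definition ssm_ricci :: "metric4 \<Rightarrow> (real^4 \<Rightarrow> 4 \<Rightarrow> real) \<Rightarrow> real^4 \<Rightarrow> 4 \<Rightarrow> 4 \<Rightarrow> real" where
  "ssm_ricci g P x i j = (\<Sum>k\<in>UNIV. ssm_curv g P x k i k j)"

definition ssm_scalar :: "metric4 \<Rightarrow> (real^4 \<Rightarrow> 4 \<Rightarrow> real) \<Rightarrow> real^4 \<Rightarrow> real" where
  "ssm_scalar g P x = (\<Sum>i\<in>UNIV. \<Sum>j\<in>UNIV. ginv g x i j * ssm_ricci g P x i j)"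

text \<open>The multiply warped metric -dt^2 + phi^(2p1) ds1^2 + phi^(2p2) ds2^2 + phi^(2p3) ds3^2
  (each one-dimensional F_i in arc-length coordinate).\<close>
definition warped_metric :: "(real \<Rightarrow> real) \<Rightarrow> real \<Rightarrow> real \<Rightarrow> real \<Rightarrow> metric4" where
  "warped_metric \<phi> p1 p2 p3 x i j =
     (if i \<noteq> j then 0
      else if i = 0 then -1
      else if i = 1 then \<phi> (x $ 0) powr (2 * p1)
      else if i = 2 then \<phi> (x $ 0) powr (2 * p2)
      else \<phi> (x $ 0) powr (2 * p3))"

definition dt_field :: "real^4 \<Rightarrow> 4 \<Rightarrow> real" where
  "dt_field x k = (if k = 0 then 1 else 0)"

end

theory Submission imports Defs begin
lemma four: "(4::4) = 0" by simp
lemma U4: "(UNIV::4 set) = {0,1,2,3}"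
proof -
  have "x \<in> {0,1,2,3}" for x :: 4 using exhaust_4[of x] unfolding four by auto
  then show ?thesis by blast
qed
lemma sum4: "sum f (UNIV::4 set) = f 0 + f 1 + f 2 + f 3"
  unfolding U4 by (simp add: ac_simps)
lemma all4: "(\<forall>i::4. P i) \<longleftrightarrow> P 0 \<and> P 1 \<and> P 2 \<and> P 3"
proof -
  have "(\<forall>i::4. P i) = (\<forall>i\<in>{0,1,2,3}. P i)" unfolding U4[symmetric] by simp
  then show ?thesis by simp
qed

lemma cases4: "(i::4) = 0 \<or> i = 1 \<or> i = 2 \<or> i = 3" using U4 by blast

definition T :: "real \<Rightarrow> real^4" where "T t = (\<chi> i. if i = 0 then t else 0)"
lemma T0[simp]: "T t $ 0 = t" by (simp add: T_def)

lemma axis0: "(x + s *\<^sub>R axis i (1::real)) $ 0 = x $ 0 + (if i = 0 then s else 0)"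
  by (auto simp: axis_def)

lemma pd_dep0:
  assumes "\<And>y. f y = F (y $ 0)"
  shows "pd f i x = (if i = 0 then deriv F (x $ 0) else 0)"
proof (cases "i = 0")
  case True
  have "pd f i x = deriv (\<lambda>s. F (s + x $ 0)) 0"
    unfolding pd_def assms axis0 using True by (simp add: add.commute)
  also have "\<dots> = deriv F (x $ 0)"
    unfolding deriv_def using DERIV_shift[of F _ 0 "x $ 0"] by simp
  finally show ?thesis using True by simp
next
  case False
  have "pd f i x = deriv (\<lambda>s. F (x $ 0)) 0"
    unfolding pd_def assms axis0 using False by simp
  also have "\<dots> = 0" by (rule DERIV_imp_deriv) (rule DERIV_const)
  finally show ?thesis using False by simp
qed

definition pp :: "real \<Rightarrow> real \<Rightarrow> real \<Rightarrow> 4 \<Rightarrow> real" where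
  "pp p1 p2 p3 i = (if i = 1 then p1 else if i = 2 then p2 else if i = 3 then p3 else 0)"

lemma wm_T: "warped_metric \<phi> p1 p2 p3 y i j = warped_metric \<phi> p1 p2 p3 (T (y$0)) i j"
  by (simp add: warped_metric_def)

lemma pd_wm: "pd (\<lambda>y. warped_metric \<phi> p1 p2 p3 y j l) i x =
   (if i = 0 then deriv (\<lambda>s. warped_metric \<phi> p1 p2 p3 (T s) j l) (x $ 0) else 0)"
  by (rule pd_dep0[where F="\<lambda>s. warped_metric \<phi> p1 p2 p3 (T s) j l"]) (simp add: warped_metric_def)

lemma gmat_T: "gmat (warped_metric \<phi> p1 p2 p3) y = gmat (warped_metric \<phi> p1 p2 p3) (T (y$0))"
  unfolding gmat_def vec_eq_iff by (simp add: warped_metric_def)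

lemma ginv_T: "ginv (warped_metric \<phi> p1 p2 p3) y = ginv (warped_metric \<phi> p1 p2 p3) (T (y$0))"
  unfolding ginv_def gmat_T[of \<phi> p1 p2 p3 y] ..

lemma conn_T: "ssm_conn (warped_metric \<phi> p1 p2 p3) dt_field y k i j =
   ssm_conn (warped_metric \<phi> p1 p2 p3) dt_field (T (y$0)) k i j"
  unfolding ssm_conn_def christoffel_def pd_wm ginv_T[of \<phi> p1 p2 p3 y] T0
  by (simp add: warped_metric_def dt_field_def sum4)

lemma pd_conn: "pd (\<lambda>y. ssm_conn (warped_metric \<phi> p1 p2 p3) dt_field y l j k) i x =
   (if i = 0 then deriv (\<lambda>s. ssm_conn (warped_metric \<phi> p1 p2 p3) dt_field (T s) l j k) (x $ 0) else 0)"
  by (rule pd_dep0[where F="\<lambda>s. ssm_conn (warped_metric \<phi> p1 p2 p3) dt_field (T s) l j k"]) (rule conn_T)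

lemma matrix_inv_eq:
  fixes A B :: "real^'n^'n"
  assumes AB: "A ** B = mat 1" and BA: "B ** A = mat 1"
  shows "matrix_inv A = B"
proof -
  have ex: "\<exists>B'. A ** B' = mat 1 \<and> B' ** A = mat 1" using assms by blast
  define C where "C = matrix_inv A"
  have C: "A ** C = mat 1" "C ** A = mat 1" unfolding C_def matrix_inv_def using someI_ex[OF ex] by auto
  have "C = C ** (A ** B)" using AB by (simp add: matrix_mul_rid)
  also have "\<dots> = (C ** A) ** B" by (simp add: matrix_mul_assoc)
  also have "\<dots> = B" using C by (simp add: matrix_mul_lid)
  finally show ?thesis unfolding C_def .
qed

lemma ginv_expl:
  assumes "\<phi> t > 0"
  shows "ginv (warped_metric \<phi> p1 p2 p3) (T t) k l =
    (if k = l then (if k = 0 then -1 else 1 / \<phi> t powr (2 * pp p1 p2 p3 k)) else 0)"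
proof -
  define B :: "real^4^4" where "B = (\<chi> k l. if k = l then (if k = 0 then -1 else 1 / \<phi> t powr (2 * pp p1 p2 p3 k)) else 0)"
  have nz0: "\<phi> t \<noteq> 0" using assms by linarith
  then have nz: "\<phi> t powr r \<noteq> 0" for r by simp
  have "gmat (warped_metric \<phi> p1 p2 p3) (T t) ** B = mat 1"
    unfolding vec_eq_iff all4 matrix_matrix_mult_def mat_def gmat_def B_def
    by (simp add: sum4 warped_metric_def pp_def nz nz0)
  moreover have "B ** gmat (warped_metric \<phi> p1 p2 p3) (T t) = mat 1"
    unfolding vec_eq_iff all4 matrix_matrix_mult_def mat_def gmat_def B_def
    by (simp add: sum4 warped_metric_def pp_def nz nz0)
  ultimately have "matrix_inv (gmat (warped_metric \<phi> p1 p2 p3) (T t)) = B" by (rule matrix_inv_eq)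
  then show ?thesis unfolding ginv_def by (simp add: B_def)
qed

lemma deriv_wm:
  assumes pos: "\<phi> t > 0" and d: "(\<phi> has_field_derivative d) (at t)"
  shows "deriv (\<lambda>s. warped_metric \<phi> p1 p2 p3 (T s) j l) t =
    (if j = l \<and> j \<noteq> 0 then 2 * pp p1 p2 p3 j * (d / \<phi> t) * \<phi> t powr (2 * pp p1 p2 p3 j) else 0)"
proof (cases "j = l \<and> j \<noteq> 0")
  case True
  have eq: "(\<lambda>s. warped_metric \<phi> p1 p2 p3 (T s) j l) = (\<lambda>s. \<phi> s powr (2 * pp p1 p2 p3 j))"
    using True cases4[of j] by (auto simp: warped_metric_def pp_def fun_eq_iff)
  have der: "((\<lambda>s. \<phi> s powr (2 * pp p1 p2 p3 j)) has_field_derivative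
      (2 * pp p1 p2 p3 j) * \<phi> t powr (2 * pp p1 p2 p3 j - real 1) * d) (at t)"
    by (rule DERIV_fun_powr[OF d pos])
  have e2: "(2 * pp p1 p2 p3 j) * \<phi> t powr (2 * pp p1 p2 p3 j - real 1) * d
     = 2 * pp p1 p2 p3 j * (d / \<phi> t) * \<phi> t powr (2 * pp p1 p2 p3 j)"
    using pos by (simp add: powr_diff)
  have "deriv (\<lambda>s. warped_metric \<phi> p1 p2 p3 (T s) j l) t = 2 * pp p1 p2 p3 j * (d / \<phi> t) * \<phi> t powr (2 * pp p1 p2 p3 j)"
    unfolding eq using DERIV_imp_deriv[OF der] e2 by simp
  then show ?thesis using True by auto
next
  case False
  have eq: "(\<lambda>s. warped_metric \<phi> p1 p2 p3 (T s) j l) = (\<lambda>s. if j = l then -1 else 0)"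
    using False by (auto simp: warped_metric_def fun_eq_iff)
  have "deriv (\<lambda>s. warped_metric \<phi> p1 p2 p3 (T s) j l) t = 0"
    unfolding eq by (rule DERIV_imp_deriv[OF DERIV_const])
  then show ?thesis unfolding if_not_P[OF False] .
qed

definition vv :: "(real \<Rightarrow> real) \<Rightarrow> real \<Rightarrow> real" where
  "vv \<phi> s = deriv \<phi> s / \<phi> s"

definition Cn :: "(real \<Rightarrow> real) \<Rightarrow> real \<Rightarrow> real \<Rightarrow> real \<Rightarrow> 4 \<Rightarrow> 4 \<Rightarrow> 4 \<Rightarrow> real \<Rightarrow> real" where
  "Cn \<phi> p1 p2 p3 k i j s =
    (if k \<noteq> 0 \<and> i = k \<and> j = 0 then pp p1 p2 p3 k * vv \<phi> s - 1
     else if k \<noteq> 0 \<and> i = 0 \<and> j = k then pp p1 p2 p3 k * vv \<phi> s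
     else if k = 0 \<and> i \<noteq> 0 \<and> j = i then \<phi> s powr (2 * pp p1 p2 p3 i) * (pp p1 p2 p3 i * vv \<phi> s - 1)
     else 0)"

lemma conn_expl:
  assumes pos: "\<phi> t > 0" and d: "(\<phi> has_field_derivative deriv \<phi> t) (at t)"
  shows "ssm_conn (warped_metric \<phi> p1 p2 p3) dt_field (T t) k i j = Cn \<phi> p1 p2 p3 k i j t"
proof -
  have "\<forall>k i j. ssm_conn (warped_metric \<phi> p1 p2 p3) dt_field (T t) k i j = Cn \<phi> p1 p2 p3 k i j t"
    unfolding all4 ssm_conn_def christoffel_def pd_wm T0 ginv_expl[of \<phi> t, OF pos] deriv_wm[OF pos d]
    using pos by (simp add: sum4 warped_metric_def dt_field_def Cn_def pp_def vv_def field_simps)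
  then show ?thesis by blast
qed

definition dv :: "(real \<Rightarrow> real) \<Rightarrow> real \<Rightarrow> real" where
  "dv \<phi> t = (deriv (deriv \<phi>) t * \<phi> t - deriv \<phi> t * deriv \<phi> t) / (\<phi> t * \<phi> t)"

definition dCn :: "(real \<Rightarrow> real) \<Rightarrow> real \<Rightarrow> real \<Rightarrow> real \<Rightarrow> 4 \<Rightarrow> 4 \<Rightarrow> 4 \<Rightarrow> real \<Rightarrow> real" where
  "dCn \<phi> p1 p2 p3 k i j t =
    (if k \<noteq> 0 \<and> i = k \<and> j = 0 then pp p1 p2 p3 k * dv \<phi> t
     else if k \<noteq> 0 \<and> i = 0 \<and> j = k then pp p1 p2 p3 k * dv \<phi> t
     else if k = 0 \<and> i \<noteq> 0 \<and> j = i then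
        2 * pp p1 p2 p3 i * vv \<phi> t * \<phi> t powr (2 * pp p1 p2 p3 i) * (pp p1 p2 p3 i * vv \<phi> t - 1)
        + \<phi> t powr (2 * pp p1 p2 p3 i) * (pp p1 p2 p3 i * dv \<phi> t)
     else 0)"

lemma vv_deriv:
  assumes pos: "\<phi> t > 0" and d1: "(\<phi> has_field_derivative deriv \<phi> t) (at t)"
    and d2: "(deriv \<phi> has_field_derivative deriv (deriv \<phi>) t) (at t)"
  shows "(vv \<phi> has_field_derivative dv \<phi> t) (at t)"
proof -
  have "vv \<phi> = (\<lambda>s. deriv \<phi> s / \<phi> s)" by (simp add: vv_def fun_eq_iff)
  then show ?thesis unfolding dv_def using DERIV_divide[OF d2 d1] pos by simp
qed

lemma powr_deriv:
  assumes pos: "\<phi> t > 0" and d1: "(\<phi> has_field_derivative deriv \<phi> t) (at t)"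
  shows "((\<lambda>s. \<phi> s powr r) has_field_derivative r * vv \<phi> t * \<phi> t powr r) (at t)"
proof -
  have der: "((\<lambda>s. \<phi> s powr r) has_field_derivative r * \<phi> t powr (r - real 1) * deriv \<phi> t) (at t)"
    by (rule DERIV_fun_powr[OF d1 pos])
  have e: "r * \<phi> t powr (r - real 1) * deriv \<phi> t = r * vv \<phi> t * \<phi> t powr r"
    using pos by (simp add: powr_diff vv_def)
  from der show ?thesis unfolding e .
qed

lemma Cn_deriv:
  assumes pos: "\<phi> t > 0" and d1: "(\<phi> has_field_derivative deriv \<phi> t) (at t)"
    and d2: "(deriv \<phi> has_field_derivative deriv (deriv \<phi>) t) (at t)"
  shows "((\<lambda>s. Cn \<phi> p1 p2 p3 k i j s) has_field_derivative dCn \<phi> p1 p2 p3 k i j t) (at t)"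
proof -
  define c1 where "c1 = (k \<noteq> 0 \<and> i = k \<and> j = 0)"
  define c2 where "c2 = (k \<noteq> 0 \<and> i = 0 \<and> j = k)"
  define c3 where "c3 = (k = 0 \<and> i \<noteq> 0 \<and> j = i)"
  define r where "r = 2 * pp p1 p2 p3 i"
  define a where "a = (if c1 \<or> c2 then pp p1 p2 p3 k else 0)"
  define b where "b = (if c1 then -1 else (0::real))"
  define c where "c = (if \<not> c1 \<and> \<not> c2 \<and> c3 then pp p1 p2 p3 i else 0)"
  define e where "e = (if \<not> c1 \<and> \<not> c2 \<and> c3 then -1 else (0::real))"
  have eq: "(\<lambda>s. Cn \<phi> p1 p2 p3 k i j s) =
     (\<lambda>s. a * vv \<phi> s + b + c * (\<phi> s powr r * vv \<phi> s) + e * \<phi> s powr r)"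
    unfolding fun_eq_iff Cn_def a_def b_def c_def e_def c1_def c2_def c3_def r_def
    by (auto simp: algebra_simps)
  have D: "((\<lambda>s. a * vv \<phi> s + b + c * (\<phi> s powr r * vv \<phi> s) + e * \<phi> s powr r) has_field_derivative
      a * dv \<phi> t + 0 + c * ((r * vv \<phi> t * \<phi> t powr r) * vv \<phi> t + dv \<phi> t * \<phi> t powr r)
      + e * (r * vv \<phi> t * \<phi> t powr r)) (at t)"
    by (intro DERIV_add DERIV_cmult DERIV_mult DERIV_const vv_deriv[OF pos d1 d2] powr_deriv[OF pos d1])
  have "a * dv \<phi> t + 0 + c * ((r * vv \<phi> t * \<phi> t powr r) * vv \<phi> t + dv \<phi> t * \<phi> t powr r)
      + e * (r * vv \<phi> t * \<phi> t powr r) = dCn \<phi> p1 p2 p3 k i j t"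
    unfolding dCn_def a_def b_def c_def e_def c1_def c2_def c3_def r_def
    by (auto simp: algebra_simps)
  then show ?thesis using D unfolding eq by simp
qed

lemma deriv_conn:
  assumes "open I" "t \<in> I"
    and H: "\<forall>s\<in>I. \<phi> s > 0 \<and> (\<phi> has_field_derivative deriv \<phi> s) (at s)"
    and d2: "(deriv \<phi> has_field_derivative deriv (deriv \<phi>) t) (at t)"
  shows "deriv (\<lambda>s. ssm_conn (warped_metric \<phi> p1 p2 p3) dt_field (T s) l j k) t = dCn \<phi> p1 p2 p3 l j k t"
proof -
  have pt: "\<phi> t > 0" "(\<phi> has_field_derivative deriv \<phi> t) (at t)" using H assms(2) by auto
  have D: "((\<lambda>s. Cn \<phi> p1 p2 p3 l j k s) has_field_derivative dCn \<phi> p1 p2 p3 l j k t) (at t)"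
    by (rule Cn_deriv[OF pt d2])
  have E: "Cn \<phi> p1 p2 p3 l j k s = ssm_conn (warped_metric \<phi> p1 p2 p3) dt_field (T s) l j k" if "s \<in> I" for s
    using conn_expl H that by auto
  have "((\<lambda>s. ssm_conn (warped_metric \<phi> p1 p2 p3) dt_field (T s) l j k) has_field_derivative dCn \<phi> p1 p2 p3 l j k t) (at t)"
    by (rule has_field_derivative_transform_within_open[OF D assms(1,2) E])
  then show ?thesis by (rule DERIV_imp_deriv)
qed

lemma scalar_expl:
  assumes "open I" and x0: "x $ 0 \<in> I"
    and H: "\<forall>s\<in>I. \<phi> s > 0 \<and> (\<phi> has_field_derivative deriv \<phi> s) (at s)"
    and d2: "(deriv \<phi> has_field_derivative deriv (deriv \<phi>) (x $ 0)) (at (x $ 0))"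
  shows "ssm_scalar (warped_metric \<phi> p1 p2 p3) dt_field x =
     - 2 * (p1 + p2 + p3) * dv \<phi> (x $ 0) - ((p1\<^sup>2 + p2\<^sup>2 + p3\<^sup>2) + (p1 + p2 + p3)\<^sup>2) * (vv \<phi> (x $ 0))\<^sup>2
     + 6 * (p1 + p2 + p3) * vv \<phi> (x $ 0) - 6"
proof -
  define t where "t = x $ 0"
  have pos: "\<phi> t > 0" and d1: "(\<phi> has_field_derivative deriv \<phi> t) (at t)" using H x0 t_def by auto
  have c: "ssm_conn (warped_metric \<phi> p1 p2 p3) dt_field x l j k = Cn \<phi> p1 p2 p3 l j k t" for l j k
    using conn_T[of \<phi> p1 p2 p3 x] conn_expl[OF pos d1] t_def by simp
  have g: "ginv (warped_metric \<phi> p1 p2 p3) x k l =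
    (if k = l then (if k = 0 then -1 else 1 / \<phi> t powr (2 * pp p1 p2 p3 k)) else 0)" for k l
    using ginv_T[of \<phi> p1 p2 p3 x] ginv_expl[of \<phi> t, OF pos] t_def by simp
  have d: "deriv (\<lambda>s. ssm_conn (warped_metric \<phi> p1 p2 p3) dt_field (T s) l j k) t = dCn \<phi> p1 p2 p3 l j k t" for l j k
    using deriv_conn[OF assms(1) x0 H d2] t_def by simp
  have nz: "\<phi> t powr r \<noteq> 0" for r using pos by simp
  show ?thesis
    unfolding ssm_scalar_def ssm_ricci_def ssm_curv_def pd_conn c g d t_def[symmetric]
    apply (simp add: sum4 Cn_def dCn_def pp_def)
    using pos apply (simp add: nz field_simps)
    apply (simp add: algebra_simps power2_eq_square)
    done
qed

lemma zero_deriv_const: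
  fixes g :: "real \<Rightarrow> real"
  assumes iI: "is_interval I" and t0: "t0 \<in> I" and D: "\<forall>s\<in>I. (g has_field_derivative 0) (at s)"
  shows "\<forall>s\<in>I. g s = g t0"
proof -
  have cI: "convex I" using iI by (simp add: is_interval_convex)
  have "\<exists>c. \<forall>x\<in>I. g x = (c::real)"
    by (rule has_field_derivative_zero_constant[OF cI]) (use D has_field_derivative_at_within in blast)
  then show ?thesis using t0 by auto
qed

lemma first_order_zero:
  fixes f :: "real \<Rightarrow> real" and a :: real
  assumes iI: "is_interval I" and t0: "t0 \<in> I"
    and D: "\<forall>s\<in>I. (f has_field_derivative a * f s) (at s)" and f0: "f t0 = 0"
  shows "\<forall>s\<in>I. f s = 0"
proof -
  define g where "g s = f s * exp (- a * s)" for s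
  have "\<forall>s\<in>I. (g has_field_derivative 0) (at s)"
  proof
    fix s assume "s \<in> I"
    then have df: "(f has_field_derivative a * f s) (at s)" using D by blast
    show "(g has_field_derivative 0) (at s)" unfolding g_def[abs_def]
      by (auto intro!: derivative_eq_intros df simp: algebra_simps)
  qed
  then have "\<forall>s\<in>I. g s = g t0" using zero_deriv_const[OF iI t0] by blast
  then show ?thesis using f0 by (simp add: g_def)
qed

lemma ode_unique:
  fixes Z Z1 :: "real \<Rightarrow> real" and c :: real
  assumes iI: "is_interval I" and t0: "t0 \<in> I"
    and D: "\<forall>s\<in>I. (Z has_field_derivative Z1 s) (at s) \<and> (Z1 has_field_derivative 3 * Z1 s - c * Z s) (at s)"
    and z0: "Z t0 = 0" and z1: "Z1 t0 = 0"
  shows "\<forall>s\<in>I. Z s = 0"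
proof -
  define y where "y s = exp (- (3/2) * s) * Z s" for s
  define y1 where "y1 s = exp (- (3/2) * s) * (Z1 s - 3/2 * Z s)" for s
  define d where "d = 9/4 - c"
  have dy: "(y has_field_derivative y1 s) (at s)" if "s \<in> I" for s
  proof -
    have a: "(Z has_field_derivative Z1 s) (at s)" using D that by blast
    show ?thesis unfolding y_def[abs_def] y1_def
      by (auto intro!: derivative_eq_intros a simp: field_simps)
  qed
  have dy1: "(y1 has_field_derivative d * y s) (at s)" if "s \<in> I" for s
  proof -
    have a: "(Z has_field_derivative Z1 s) (at s)" "(Z1 has_field_derivative 3 * Z1 s - c * Z s) (at s)"
      using D that by blast+
    show ?thesis unfolding y_def y1_def[abs_def] d_def
      by (auto intro!: derivative_eq_intros a simp: field_simps)
  qed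
  have y0: "y t0 = 0" "y1 t0 = 0" using z0 z1 by (simp_all add: y_def y1_def)
  have "\<forall>s\<in>I. y s = 0"
  proof (cases "d \<ge> 0")
    case True
    define q where "q = sqrt d"
    have qq: "q * q = d" using True by (simp add: q_def)
    define u where "u s = y1 s - q * y s" for s
    have du: "\<forall>s\<in>I. (u has_field_derivative (- q) * u s) (at s)"
    proof
      fix s assume s: "s \<in> I"
      have "(u has_field_derivative d * y s - q * y1 s) (at s)"
        unfolding u_def[abs_def] by (auto intro!: derivative_eq_intros dy dy1 s)
      then show "(u has_field_derivative (- q) * u s) (at s)"
        by (simp add: u_def qq[symmetric] algebra_simps)
    qed
    have u0: "\<forall>s\<in>I. u s = 0" by (rule first_order_zero[OF iI t0 du]) (simp add: u_def y0)
    have "\<forall>s\<in>I. (y has_field_derivative q * y s) (at s)"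
      using dy u0 by (simp add: u_def)
    then show ?thesis using first_order_zero[OF iI t0] y0 by blast
  next
    case False
    define E where "E s = (y1 s)\<^sup>2 - d * (y s)\<^sup>2" for s
    have "\<forall>s\<in>I. (E has_field_derivative 0) (at s)"
    proof
      fix s assume s: "s \<in> I"
      show "(E has_field_derivative 0) (at s)"
        unfolding E_def[abs_def] by (auto intro!: derivative_eq_intros dy dy1 s simp: algebra_simps)
    qed
    then have "\<forall>s\<in>I. E s = E t0" using zero_deriv_const[OF iI t0] by blast
    then have "\<forall>s\<in>I. (y1 s)\<^sup>2 + (- d) * (y s)\<^sup>2 = 0" using y0 by (simp add: E_def)
    moreover have "- d > 0" using False by simp
    ultimately show ?thesis
    proof (intro ballI)
      fix s assume h: "\<forall>s\<in>I. (y1 s)\<^sup>2 + (- d) * (y s)\<^sup>2 = 0" "- d > 0" and s: "s \<in> I"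
      have e: "(y1 s)\<^sup>2 + (- d) * (y s)\<^sup>2 = 0" using h s by blast
      have "(- d) * (y s)\<^sup>2 \<ge> 0" using h(2) by (intro mult_nonneg_nonneg) auto
      moreover have "(y1 s)\<^sup>2 \<ge> 0" by simp
      ultimately have "(- d) * (y s)\<^sup>2 = 0" using e by linarith
      then show "y s = 0" using h(2) by simp
    qed
  qed
  then show ?thesis by (simp add: y_def)
qed

lemma ode_match:
  fixes W W1 F F1 :: "real \<Rightarrow> real" and c :: real
  assumes iI: "is_interval I" and t0: "t0 \<in> I"
    and DW: "\<forall>s\<in>I. (W has_field_derivative W1 s) (at s) \<and> (W1 has_field_derivative 3 * W1 s - c * W s) (at s)"
    and DF: "\<And>s. (F has_field_derivative F1 s) (at s) \<and> (F1 has_field_derivative 3 * F1 s - c * F s) (at s)"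
    and m0: "F t0 = W t0" and m1: "F1 t0 = W1 t0"
  shows "\<forall>s\<in>I. W s = F s"
proof -
  have "\<forall>s\<in>I. ((\<lambda>s. W s - F s) has_field_derivative W1 s - F1 s) (at s) \<and>
     ((\<lambda>s. W1 s - F1 s) has_field_derivative 3 * (W1 s - F1 s) - c * (W s - F s)) (at s)"
  proof
    fix s assume s: "s \<in> I"
    have a: "(W has_field_derivative W1 s) (at s)" "(W1 has_field_derivative 3 * W1 s - c * W s) (at s)"
      using DW s by blast+
    have b: "(F has_field_derivative F1 s) (at s)" "(F1 has_field_derivative 3 * F1 s - c * F s) (at s)"
      using DF by blast+
    show "((\<lambda>s. W s - F s) has_field_derivative W1 s - F1 s) (at s) \<and>
     ((\<lambda>s. W1 s - F1 s) has_field_derivative 3 * (W1 s - F1 s) - c * (W s - F s)) (at s)"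
      using DERIV_diff[OF a(1) b(1)] DERIV_diff[OF a(2) b(2)] by (simp add: algebra_simps)
  qed
  from ode_unique[OF iI t0 this] m0 m1 show ?thesis by simp
qed

lemma sol_a:
  fixes W W1 :: "real \<Rightarrow> real" and c r :: real
  assumes iI: "is_interval I" and t0: "t0 \<in> I"
    and DW: "\<forall>s\<in>I. (W has_field_derivative W1 s) (at s) \<and> (W1 has_field_derivative 3 * W1 s - c * W s) (at s)"
    and r: "r > 0" "r * r = 9 - 4 * c"
  shows "\<exists>c1 c2. \<forall>s\<in>I. W s = c1 * exp ((3 + r) / 2 * s) + c2 * exp ((3 - r) / 2 * s)"
proof -
  define a where "a = (3 + r) / 2"
  define b where "b = (3 - r) / 2"
  have aa: "a * a = 3 * a - c" and bb: "b * b = 3 * b - c" and ab: "a - b = r"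
    using r(2) by (simp_all add: a_def b_def field_simps)
  define c1 where "c1 = (W1 t0 - b * W t0) / (r * exp (a * t0))"
  define c2 where "c2 = (a * W t0 - W1 t0) / (r * exp (b * t0))"
  define F where "F s = c1 * exp (a * s) + c2 * exp (b * s)" for s
  define F1 where "F1 s = c1 * a * exp (a * s) + c2 * b * exp (b * s)" for s
  have DF: "(F has_field_derivative F1 s) (at s) \<and> (F1 has_field_derivative 3 * F1 s - c * F s) (at s)" for s
  proof
    show "(F has_field_derivative F1 s) (at s)" unfolding F_def[abs_def] F1_def
      by (auto intro!: derivative_eq_intros simp: algebra_simps)
    have "(F1 has_field_derivative c1 * a * (a * exp (a * s)) + c2 * b * (b * exp (b * s))) (at s)"
      unfolding F1_def[abs_def] by (auto intro!: derivative_eq_intros simp: algebra_simps)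
    moreover have "c1 * a * (a * exp (a * s)) + c2 * b * (b * exp (b * s)) = 3 * F1 s - c * F s"
    proof -
      have "c1 * a * (a * exp (a * s)) + c2 * b * (b * exp (b * s)) =
          c1 * exp (a * s) * (a * a) + c2 * exp (b * s) * (b * b)" by (simp add: algebra_simps)
      also have "\<dots> = 3 * F1 s - c * F s" unfolding aa bb F_def F1_def by (simp add: algebra_simps)
      finally show ?thesis .
    qed
    ultimately show "(F1 has_field_derivative 3 * F1 s - c * F s) (at s)" by (rule DERIV_cong)
  qed
  have ea: "exp (a * t0) \<noteq> 0" and eb: "exp (b * t0) \<noteq> 0" by simp_all
  have m0: "F t0 = W t0"
    unfolding F_def c1_def c2_def using r(1) ab by (simp add: field_simps)
  have m1: "F1 t0 = W1 t0"
    unfolding F1_def c1_def c2_def using r(1) ab by (simp add: field_simps)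
  have "\<forall>s\<in>I. W s = F s" by (rule ode_match[OF iI t0 DW DF m0 m1])
  then show ?thesis unfolding F_def a_def b_def by blast
qed

lemma sol_b:
  fixes W W1 :: "real \<Rightarrow> real" and c :: real
  assumes iI: "is_interval I" and t0: "t0 \<in> I"
    and DW: "\<forall>s\<in>I. (W has_field_derivative W1 s) (at s) \<and> (W1 has_field_derivative 3 * W1 s - c * W s) (at s)"
    and c: "4 * c = 9"
  shows "\<exists>c1 c2. \<forall>s\<in>I. W s = c1 * exp (3 / 2 * s) + c2 * s * exp (3 / 2 * s)"
proof -
  define c2 where "c2 = (W1 t0 - 3/2 * W t0) / exp (3/2 * t0)"
  define c1 where "c1 = W t0 / exp (3/2 * t0) - c2 * t0"
  define F where "F s = c1 * exp (3 / 2 * s) + c2 * s * exp (3 / 2 * s)" for s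
  define F1 where "F1 s = 3/2 * c1 * exp (3 / 2 * s) + c2 * exp (3 / 2 * s) + 3/2 * c2 * s * exp (3 / 2 * s)" for s
  have DF: "(F has_field_derivative F1 s) (at s) \<and> (F1 has_field_derivative 3 * F1 s - c * F s) (at s)" for s
  proof
    show "(F has_field_derivative F1 s) (at s)" unfolding F_def[abs_def] F1_def
      by (auto intro!: derivative_eq_intros simp: algebra_simps)
    have "(F1 has_field_derivative 9/4 * c1 * exp (3 / 2 * s) + 3 * c2 * exp (3 / 2 * s) + 9/4 * c2 * s * exp (3 / 2 * s)) (at s)"
      unfolding F1_def[abs_def] by (auto intro!: derivative_eq_intros simp: field_simps)
    moreover have "9/4 * c1 * exp (3 / 2 * s) + 3 * c2 * exp (3 / 2 * s) + 9/4 * c2 * s * exp (3 / 2 * s) = 3 * F1 s - c * F s"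
    proof -
      have cc: "c = 9/4" using c by simp
      show ?thesis unfolding F_def F1_def cc by (simp add: field_simps)
    qed
    ultimately show "(F1 has_field_derivative 3 * F1 s - c * F s) (at s)" by (rule DERIV_cong)
  qed
  have m0: "F t0 = W t0"
    unfolding F_def c1_def c2_def by (simp add: field_simps)
  have m1: "F1 t0 = W1 t0"
    unfolding F1_def c1_def c2_def by (simp add: field_simps)
  have "\<forall>s\<in>I. W s = F s" by (rule ode_match[OF iI t0 DW DF m0 m1])
  then show ?thesis unfolding F_def by blast
qed

lemma sol_c:
  fixes W W1 :: "real \<Rightarrow> real" and c r :: real
  assumes iI: "is_interval I" and t0: "t0 \<in> I"
    and DW: "\<forall>s\<in>I. (W has_field_derivative W1 s) (at s) \<and> (W1 has_field_derivative 3 * W1 s - c * W s) (at s)"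
    and r: "r > 0" "r * r = 4 * c - 9"
  shows "\<exists>c1 c2. \<forall>s\<in>I. W s = c1 * exp (3 / 2 * s) * cos (r / 2 * s) + c2 * exp (3 / 2 * s) * sin (r / 2 * s)"
proof -
  define E0 where "E0 = exp (3/2 * t0)"
  define C0 where "C0 = cos (r / 2 * t0)"
  define S0 where "S0 = sin (r / 2 * t0)"
  define A where "A = W t0 / E0"
  define B where "B = (W1 t0 - 3/2 * W t0) / (E0 * (r / 2))"
  define c1 where "c1 = A * C0 - B * S0"
  define c2 where "c2 = A * S0 + B * C0"
  define F where "F s = c1 * exp (3 / 2 * s) * cos (r / 2 * s) + c2 * exp (3 / 2 * s) * sin (r / 2 * s)" for s
  define F1 where "F1 s = exp (3 / 2 * s) * ((3/2 * c1 + r/2 * c2) * cos (r / 2 * s) + (3/2 * c2 - r/2 * c1) * sin (r / 2 * s))" for s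
  have DF: "(F has_field_derivative F1 s) (at s) \<and> (F1 has_field_derivative 3 * F1 s - c * F s) (at s)" for s
  proof
    show "(F has_field_derivative F1 s) (at s)" unfolding F_def[abs_def] F1_def
      by (auto intro!: derivative_eq_intros simp: algebra_simps)
    have "(F1 has_field_derivative
       3/2 * exp (3 / 2 * s) * ((3/2 * c1 + r/2 * c2) * cos (r / 2 * s) + (3/2 * c2 - r/2 * c1) * sin (r / 2 * s))
       + exp (3 / 2 * s) * (r/2 * (- (3/2 * c1 + r/2 * c2) * sin (r / 2 * s) + (3/2 * c2 - r/2 * c1) * cos (r / 2 * s)))) (at s)"
      unfolding F1_def[abs_def] by (auto intro!: derivative_eq_intros simp: field_simps)
    moreover have "3/2 * exp (3 / 2 * s) * ((3/2 * c1 + r/2 * c2) * cos (r / 2 * s) + (3/2 * c2 - r/2 * c1) * sin (r / 2 * s))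
       + exp (3 / 2 * s) * (r/2 * (- (3/2 * c1 + r/2 * c2) * sin (r / 2 * s) + (3/2 * c2 - r/2 * c1) * cos (r / 2 * s)))
       = 3 * F1 s - c * F s"
    proof -
      have cc: "c = (r * r + 9) / 4" using r(2) by simp
      show ?thesis unfolding F_def F1_def cc by (simp add: field_simps)
    qed
    ultimately show "(F1 has_field_derivative 3 * F1 s - c * F s) (at s)" by (rule DERIV_cong)
  qed
  have E0: "E0 > 0" by (simp add: E0_def)
  have sc: "S0 * S0 + C0 * C0 = 1" unfolding S0_def C0_def by (metis power2_eq_square sin_cos_squared_add)
  have "c1 * C0 + c2 * S0 = A * (S0 * S0 + C0 * C0)" unfolding c1_def c2_def by (simp add: algebra_simps)
  then have k1: "c1 * C0 + c2 * S0 = A" using sc by simp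
  have "c2 * C0 - c1 * S0 = B * (S0 * S0 + C0 * C0)" unfolding c1_def c2_def by (simp add: algebra_simps)
  then have k2: "c2 * C0 - c1 * S0 = B" using sc by simp
  have m0: "F t0 = W t0"
  proof -
    have "F t0 = E0 * (c1 * C0 + c2 * S0)" unfolding F_def E0_def C0_def S0_def by (simp add: algebra_simps)
    also have "\<dots> = W t0" unfolding k1 A_def using E0 by simp
    finally show ?thesis .
  qed
  have m1: "F1 t0 = W1 t0"
  proof -
    have "F1 t0 = E0 * (3/2 * (c1 * C0 + c2 * S0) + r/2 * (c2 * C0 - c1 * S0))"
      unfolding F1_def E0_def C0_def S0_def by (simp add: algebra_simps)
    also have "\<dots> = W1 t0" unfolding k1 k2 A_def B_def using E0 r(1) by (simp add: field_simps)
    finally show ?thesis .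
  qed
  have "\<forall>s\<in>I. W s = F s" by (rule ode_match[OF iI t0 DW DF m0 m1])
  then show ?thesis unfolding F_def by blast
qed

lemma powr_deriv2:
  fixes U :: "real \<Rightarrow> real"
  assumes "U s > 0" "(U has_field_derivative m) (at s)"
  shows "((\<lambda>s. U s powr r) has_field_derivative r * (U s powr r / U s) * m) (at s)"
proof -
  have der: "((\<lambda>s. U s powr r) has_field_derivative r * U s powr (r - real 1) * m) (at s)"
    by (rule DERIV_fun_powr[OF assms(2,1)])
  have e: "r * U s powr (r - real 1) * m = r * (U s powr r / U s) * m"
    using assms(1) by (simp add: powr_diff)
  from der show ?thesis unfolding e .
qed

lemma vv_dv_powr:
  fixes U U1 U2 :: "real \<Rightarrow> real" and k :: real
  assumes oI: "open I" and t: "t \<in> I"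
    and H: "\<forall>s\<in>I. \<phi> s = U s powr k \<and> U s > 0 \<and> (U has_field_derivative U1 s) (at s)
              \<and> (U1 has_field_derivative U2 s) (at s)"
  shows "vv \<phi> t = k * U1 t / U t"
    and "dv \<phi> t = k * (U2 t * U t - U1 t * U1 t) / (U t * U t)"
proof -
  define F1 where "F1 s = k * (U s powr k / U s) * U1 s" for s
  define F2 where "F2 s = k * (((k - 1) * (U s powr (k - 1) / U s) * U1 s) * U1 s + U2 s * U s powr (k - 1))" for s
  have dphi: "(\<phi> has_field_derivative F1 s) (at s)" if s: "s \<in> I" for s
  proof -
    have "((\<lambda>s. U s powr k) has_field_derivative F1 s) (at s)"
      unfolding F1_def using powr_deriv2[of U s "U1 s" k] H s by auto
    then show ?thesis
      by (rule has_field_derivative_transform_within_open[OF _ oI s]) (use H in auto)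
  qed
  then have dphi_eq: "deriv \<phi> s = F1 s" if "s \<in> I" for s using that by (simp add: DERIV_imp_deriv)
  have F1': "F1 s = k * U s powr (k - 1) * U1 s" if "s \<in> I" for s
  proof -
    have "U s > 0" using H that by auto
    then show ?thesis by (simp add: F1_def powr_diff)
  qed
  have "(deriv \<phi> has_field_derivative F2 t) (at t)"
  proof -
    have a: "((\<lambda>s. U s powr (k - 1)) has_field_derivative (k - 1) * (U t powr (k - 1) / U t) * U1 t) (at t)"
      using powr_deriv2[of U t "U1 t" "k - 1"] H t by auto
    have b: "(U1 has_field_derivative U2 t) (at t)" using H t by auto
    have "((\<lambda>s. k * (U s powr (k - 1) * U1 s)) has_field_derivative F2 t) (at t)"
      unfolding F2_def by (rule DERIV_cmult[OF DERIV_mult[OF a b]])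
    then show ?thesis
      by (rule has_field_derivative_transform_within_open[OF _ oI t]) (simp add: dphi_eq F1')
  qed
  then have d2: "deriv (deriv \<phi>) t = F2 t" by (simp add: DERIV_imp_deriv)
  have Ut: "U t > 0" and pt: "\<phi> t = U t powr k" using H t by auto
  have P0: "U t powr k > 0" using Ut by simp
  have km1: "U t powr (k - 1) = U t powr k / U t" using Ut by (simp add: powr_diff)
  show "vv \<phi> t = k * U1 t / U t"
    unfolding vv_def dphi_eq[OF t] F1_def pt using P0 Ut by (simp add: field_simps)
  show "dv \<phi> t = k * (U2 t * U t - U1 t * U1 t) / (U t * U t)"
    unfolding dv_def d2 dphi_eq[OF t] F1_def F2_def pt km1 using P0 Ut
    by (simp add: field_simps power2_eq_square)
qed

lemma fwd_zeta0:
  fixes \<phi> :: "real \<Rightarrow> real" and e S :: real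
  assumes iI: "is_interval I" and oI: "open I" and t0: "t0 \<in> I"
    and H: "\<forall>s\<in>I. \<phi> s > 0 \<and> (\<phi> has_field_derivative deriv \<phi> s) (at s)"
    and D2: "\<forall>s\<in>I. (deriv \<phi> has_field_derivative deriv (deriv \<phi>) s) (at s)"
    and SS: "\<forall>t\<in>I. - e * (vv \<phi> t)\<^sup>2 - 6 = S"
    and e: "e > 0"
  shows "(S + 6 = 0 \<and> (\<exists>c. \<forall>t\<in>I. \<phi> t = c))
       \<or> (S + 6 < 0 \<and> (\<exists>c0. \<exists>\<sigma>\<in>{1, -1::real}. \<forall>t\<in>I. \<phi> t = c0 * exp (\<sigma> * sqrt (- (S + 6) / e) * t)))"
proof -
  have vsq: "(vv \<phi> t)\<^sup>2 = - (S + 6) / e" if "t \<in> I" for t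
    using SS that e by (auto simp: field_simps)
  consider "S + 6 = 0" | "S + 6 < 0" | "S + 6 > 0" by linarith
  then show ?thesis
  proof cases
    case 1
    have "\<forall>s\<in>I. (\<phi> has_field_derivative 0) (at s)"
    proof
      fix s assume s: "s \<in> I"
      have "(vv \<phi> s)\<^sup>2 = 0" using vsq[OF s] 1 by simp
      then have "deriv \<phi> s = 0" using H s by (auto simp: vv_def)
      then show "(\<phi> has_field_derivative 0) (at s)" using H s by metis
    qed
    then have "\<forall>s\<in>I. \<phi> s = \<phi> t0" by (rule zero_deriv_const[OF iI t0])
    then show ?thesis using 1 by blast
  next
    case 3
    have "(vv \<phi> t0)\<^sup>2 \<ge> 0" by simp
    moreover have "- (S + 6) / e < 0" using 3 e by (simp add: divide_neg_pos)
    ultimately show ?thesis using vsq[OF t0] by linarith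
  next
    case 2
    define a where "a = sqrt (- (S + 6) / e)"
    have apos: "a > 0" unfolding a_def using 2 e by simp
    have aa: "a\<^sup>2 = - (S + 6) / e" unfolding a_def using 2 e by simp
    have pm: "vv \<phi> t = a \<or> vv \<phi> t = - a" if "t \<in> I" for t
    proof -
      have "(vv \<phi> t)\<^sup>2 = a\<^sup>2" using vsq[OF that] aa by simp
      then show ?thesis unfolding power2_eq_iff .
    qed
    define \<sigma> where "\<sigma> = (if vv \<phi> t0 > 0 then 1 else (-1::real))"
    have vt0: "vv \<phi> t0 = \<sigma> * a" using pm[OF t0] apos unfolding \<sigma>_def by auto
    have cont: "isCont (vv \<phi>) x" if "x \<in> I" for x
      using vv_deriv[of \<phi> x] H D2 that by (meson DERIV_isCont)
    have const: "vv \<phi> t = \<sigma> * a" if t: "t \<in> I" for t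
    proof (rule ccontr)
      assume ne: "vv \<phi> t \<noteq> \<sigma> * a"
      have vt: "vv \<phi> t = - (\<sigma> * a)" using pm[OF t] ne unfolding \<sigma>_def by auto
      define lo where "lo = min t0 t"
      define hi where "hi = max t0 t"
      have sub: "x \<in> I" if "lo \<le> x" "x \<le> hi" for x
        using iI t0 t that unfolding lo_def hi_def is_interval_1
        by (metis max_def min_def)
      have ct: "\<forall>x. lo \<le> x \<and> x \<le> hi \<longrightarrow> isCont (vv \<phi>) x" using sub cont by blast
      have lohi: "lo \<le> hi" unfolding lo_def hi_def by simp
      have opp: "(vv \<phi> lo \<le> 0 \<and> 0 \<le> vv \<phi> hi) \<or> (vv \<phi> hi \<le> 0 \<and> 0 \<le> vv \<phi> lo)"
        using vt vt0 apos unfolding lo_def hi_def \<sigma>_def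
        by (cases "t0 \<le> t") (auto simp: min_def max_def)
      obtain x where x: "lo \<le> x" "x \<le> hi" "vv \<phi> x = 0"
        using opp
      proof
        assume "vv \<phi> lo \<le> 0 \<and> 0 \<le> vv \<phi> hi"
        then show ?thesis using IVT[of "vv \<phi>" lo 0 hi] lohi ct that by blast
      next
        assume "vv \<phi> hi \<le> 0 \<and> 0 \<le> vv \<phi> lo"
        then show ?thesis using IVT2[of "vv \<phi>" hi 0 lo] lohi ct that by blast
      qed
      have "x \<in> I" using sub x by blast
      from vsq[OF this] x(3) aa apos 2 e show False by simp
    qed
    define h where "h s = \<phi> s * exp (- (\<sigma> * a) * s)" for s
    have "\<forall>s\<in>I. (h has_field_derivative 0) (at s)"
    proof
      fix s assume s: "s \<in> I"
      have df: "(\<phi> has_field_derivative (\<sigma> * a) * \<phi> s) (at s)"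
      proof -
        have "deriv \<phi> s = (\<sigma> * a) * \<phi> s" using const[OF s] H s by (auto simp: vv_def field_simps)
        then show ?thesis using H s by metis
      qed
      show "(h has_field_derivative 0) (at s)" unfolding h_def[abs_def]
        by (auto intro!: derivative_eq_intros df simp: algebra_simps)
    qed
    then have hc: "\<forall>s\<in>I. h s = h t0" by (rule zero_deriv_const[OF iI t0])
    have "\<forall>s\<in>I. \<phi> s = h t0 * exp (\<sigma> * a * s)"
    proof
      fix s assume s: "s \<in> I"
      have "\<phi> s = h s * exp (\<sigma> * a * s)" unfolding h_def by (simp add: mult.assoc exp_add[symmetric])
      then show "\<phi> s = h t0 * exp (\<sigma> * a * s)" using hc s by simp
    qed
    moreover have "\<sigma> \<in> {1, -1}" unfolding \<sigma>_def by simp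
    ultimately show ?thesis using 2 unfolding a_def by blast
  qed
qed

lemma fwd_zeta:
  fixes \<phi> :: "real \<Rightarrow> real" and z e S :: real
  assumes iI: "is_interval I" and oI: "open I" and t0: "t0 \<in> I"
    and H: "\<forall>s\<in>I. \<phi> s > 0 \<and> (\<phi> has_field_derivative deriv \<phi> s) (at s)"
    and D2: "\<forall>s\<in>I. (deriv \<phi> has_field_derivative deriv (deriv \<phi>) s) (at s)"
    and SS: "\<forall>t\<in>I. - 2 * z * dv \<phi> t - (e + z\<^sup>2) * (vv \<phi> t)\<^sup>2 + 6 * z * vv \<phi> t - 6 = S"
    and z: "z \<noteq> 0" and e: "e \<ge> 0"
  shows "(S + 6 < 9 * z\<^sup>2 / (e + z\<^sup>2) \<and>
            (\<exists>c1 c2. \<forall>t\<in>I.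
               let r = sqrt (9 - (S + 6) * (e + z\<^sup>2) / z\<^sup>2);
                   u = c1 * exp ((3 + r) / 2 * t) + c2 * exp ((3 - r) / 2 * t)
               in u > 0 \<and> \<phi> t = u powr (2 * z / (e + z\<^sup>2))))
          \<or> (S + 6 = 9 * z\<^sup>2 / (e + z\<^sup>2) \<and>
            (\<exists>c1 c2. \<forall>t\<in>I.
               let u = c1 * exp (3 / 2 * t) + c2 * t * exp (3 / 2 * t)
               in u > 0 \<and> \<phi> t = u powr (2 * z / (e + z\<^sup>2))))
          \<or> (S + 6 > 9 * z\<^sup>2 / (e + z\<^sup>2) \<and>
            (\<exists>c1 c2. \<forall>t\<in>I.
               let r = sqrt (-9 + (S + 6) * (e + z\<^sup>2) / z\<^sup>2);
                   u = c1 * exp (3 / 2 * t) * cos (r / 2 * t) + c2 * exp (3 / 2 * t) * sin (r / 2 * t)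
               in u > 0 \<and> \<phi> t = u powr (2 * z / (e + z\<^sup>2))))"
proof -
  have ez: "e + z\<^sup>2 > 0" using z e by (simp add: add_nonneg_pos)
  define k where "k = 2 * z / (e + z\<^sup>2)"
  have k0: "k \<noteq> 0" unfolding k_def using z ez by simp
  define c where "c = (S + 6) * (e + z\<^sup>2) / (4 * z\<^sup>2)"
  define W where "W s = \<phi> s powr (1 / k)" for s
  define W1 where "W1 s = 1 / k * (vv \<phi> s * W s)" for s
  have DW: "\<forall>s\<in>I. (W has_field_derivative W1 s) (at s) \<and> (W1 has_field_derivative 3 * W1 s - c * W s) (at s)"
  proof
    fix s assume s: "s \<in> I"
    have pos: "\<phi> s > 0" and d1: "(\<phi> has_field_derivative deriv \<phi> s) (at s)" using H s by auto
    have d2: "(deriv \<phi> has_field_derivative deriv (deriv \<phi>) s) (at s)" using D2 s by auto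
    have dW: "(W has_field_derivative W1 s) (at s)"
    proof -
      have "((\<lambda>s. \<phi> s powr (1 / k)) has_field_derivative 1 / k * vv \<phi> s * \<phi> s powr (1 / k)) (at s)"
        by (rule powr_deriv[OF pos d1])
      then show ?thesis unfolding W_def[abs_def] W1_def by (simp add: mult.assoc)
    qed
    define w where "w = W1 s"
    have dW': "(W has_field_derivative w) (at s)" using dW w_def by simp
    have "(W1 has_field_derivative 1 / k * (dv \<phi> s * W s + w * vv \<phi> s)) (at s)"
      unfolding W1_def[abs_def] by (rule DERIV_cmult[OF DERIV_mult[OF vv_deriv[OF pos d1 d2] dW']])
    then have "(W1 has_field_derivative 1 / k * (dv \<phi> s * W s + W1 s * vv \<phi> s)) (at s)"
      unfolding w_def .
    moreover have "1 / k * (dv \<phi> s * W s + W1 s * vv \<phi> s) = 3 * W1 s - c * W s"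
    proof -
      have S: "- 2 * z * dv \<phi> s - (e + z\<^sup>2) * (vv \<phi> s)\<^sup>2 + 6 * z * vv \<phi> s - 6 = S" using SS s by blast
      have dvs: "dv \<phi> s = 3 * vv \<phi> s - (S + 6) / (2 * z) - (e + z\<^sup>2) / (2 * z) * (vv \<phi> s)\<^sup>2"
        using S z by (simp add: field_simps)
      show ?thesis unfolding W1_def dvs k_def c_def using z ez
        by (simp add: field_simps power2_eq_square)
    qed
    ultimately show "(W has_field_derivative W1 s) (at s) \<and> (W1 has_field_derivative 3 * W1 s - c * W s) (at s)"
      using dW DERIV_cong by blast
  qed
  have fin: "\<forall>t\<in>I. G t > 0 \<and> \<phi> t = G t powr (2 * z / (e + z\<^sup>2))" if hG: "\<forall>s\<in>I. W s = G s" for G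
  proof
    fix t assume t: "t \<in> I"
    have pos: "\<phi> t > 0" using H t by auto
    have "G t = \<phi> t powr (1 / k)" using hG t W_def by simp
    moreover have "(\<phi> t powr (1 / k)) powr k = \<phi> t" using pos k0 by (simp add: powr_powr)
    ultimately show "G t > 0 \<and> \<phi> t = G t powr (2 * z / (e + z\<^sup>2))" using pos unfolding k_def by simp
  qed
  have c4: "4 * c = (S + 6) * (e + z\<^sup>2) / z\<^sup>2" unfolding c_def using z by (simp add: field_simps)
  have cmp: "(S + 6 < 9 * z\<^sup>2 / (e + z\<^sup>2)) = (4 * c < 9)"
       "(S + 6 = 9 * z\<^sup>2 / (e + z\<^sup>2)) = (4 * c = 9)"
       "(S + 6 > 9 * z\<^sup>2 / (e + z\<^sup>2)) = (4 * c > 9)"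
    unfolding c4 using z ez by (simp_all add: field_simps)
  consider "4 * c < 9" | "4 * c = 9" | "4 * c > 9" by linarith
  then show ?thesis
  proof cases
    case 1
    define r where "r = sqrt (9 - (S + 6) * (e + z\<^sup>2) / z\<^sup>2)"
    have r: "r > 0" "r * r = 9 - 4 * c" unfolding r_def c4 using 1 c4 by simp_all
    obtain c1 c2 where "\<forall>s\<in>I. W s = c1 * exp ((3 + r) / 2 * s) + c2 * exp ((3 - r) / 2 * s)"
      using sol_a[OF iI t0 DW r] by blast
    from fin[OF this] show ?thesis using 1 cmp unfolding Let_def r_def by blast
  next
    case 2
    obtain c1 c2 where "\<forall>s\<in>I. W s = c1 * exp (3 / 2 * s) + c2 * s * exp (3 / 2 * s)"
      using sol_b[OF iI t0 DW 2] by blast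
    from fin[OF this] show ?thesis using 2 cmp unfolding Let_def by blast
  next
    case 3
    define r where "r = sqrt (-9 + (S + 6) * (e + z\<^sup>2) / z\<^sup>2)"
    have r: "r > 0" "r * r = 4 * c - 9" unfolding r_def c4 using 3 c4 by simp_all
    obtain c1 c2 where "\<forall>s\<in>I. W s = c1 * exp (3 / 2 * s) * cos (r / 2 * s) + c2 * exp (3 / 2 * s) * sin (r / 2 * s)"
      using sol_c[OF iI t0 DW r] by blast
    from fin[OF this] show ?thesis using 3 cmp unfolding Let_def r_def by blast
  qed
qed

lemma fam_a:
  fixes c r c1 c2 :: real
  assumes r: "r * r = 9 - 4 * c"
  defines "F \<equiv> \<lambda>s. c1 * exp ((3 + r) / 2 * s) + c2 * exp ((3 - r) / 2 * s)"
  shows "\<exists>F1. \<forall>s. (F has_field_derivative F1 s) (at s) \<and> (F1 has_field_derivative 3 * F1 s - c * F s) (at s)"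
proof -
  define a where "a = (3 + r) / 2"
  define b where "b = (3 - r) / 2"
  have aa: "a * a = 3 * a - c" and bb: "b * b = 3 * b - c"
    using r by (simp_all add: a_def b_def field_simps)
  define F1 where "F1 s = c1 * a * exp (a * s) + c2 * b * exp (b * s)" for s
  have Fe: "F = (\<lambda>s. c1 * exp (a * s) + c2 * exp (b * s))" unfolding F_def a_def b_def ..
  have "(F has_field_derivative F1 s) (at s) \<and> (F1 has_field_derivative 3 * F1 s - c * F s) (at s)" for s
  proof
    show "(F has_field_derivative F1 s) (at s)" unfolding Fe F1_def
      by (auto intro!: derivative_eq_intros simp: algebra_simps)
    have "(F1 has_field_derivative c1 * a * (a * exp (a * s)) + c2 * b * (b * exp (b * s))) (at s)"
      unfolding F1_def[abs_def] by (auto intro!: derivative_eq_intros simp: algebra_simps)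
    moreover have "c1 * a * (a * exp (a * s)) + c2 * b * (b * exp (b * s)) = 3 * F1 s - c * F s"
    proof -
      have "c1 * a * (a * exp (a * s)) + c2 * b * (b * exp (b * s)) =
          c1 * exp (a * s) * (a * a) + c2 * exp (b * s) * (b * b)" by (simp add: algebra_simps)
      also have "\<dots> = 3 * F1 s - c * F s" unfolding aa bb Fe F1_def by (simp add: algebra_simps)
      finally show ?thesis .
    qed
    ultimately show "(F1 has_field_derivative 3 * F1 s - c * F s) (at s)" by (rule DERIV_cong)
  qed
  then show ?thesis by blast
qed

lemma fam_b:
  fixes c c1 c2 :: real
  assumes c: "4 * c = 9"
  defines "F \<equiv> \<lambda>s. c1 * exp (3 / 2 * s) + c2 * s * exp (3 / 2 * s)"
  shows "\<exists>F1. \<forall>s. (F has_field_derivative F1 s) (at s) \<and> (F1 has_field_derivative 3 * F1 s - c * F s) (at s)"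
proof -
  define F1 where "F1 s = 3/2 * c1 * exp (3 / 2 * s) + c2 * exp (3 / 2 * s) + 3/2 * c2 * s * exp (3 / 2 * s)" for s
  have "(F has_field_derivative F1 s) (at s) \<and> (F1 has_field_derivative 3 * F1 s - c * F s) (at s)" for s
  proof
    show "(F has_field_derivative F1 s) (at s)" unfolding F_def F1_def
      by (auto intro!: derivative_eq_intros simp: algebra_simps)
    have "(F1 has_field_derivative 9/4 * c1 * exp (3 / 2 * s) + 3 * c2 * exp (3 / 2 * s) + 9/4 * c2 * s * exp (3 / 2 * s)) (at s)"
      unfolding F1_def[abs_def] by (auto intro!: derivative_eq_intros simp: field_simps)
    moreover have "9/4 * c1 * exp (3 / 2 * s) + 3 * c2 * exp (3 / 2 * s) + 9/4 * c2 * s * exp (3 / 2 * s) = 3 * F1 s - c * F s"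
    proof -
      have cc: "c = 9/4" using c by simp
      show ?thesis unfolding F_def F1_def cc by (simp add: field_simps)
    qed
    ultimately show "(F1 has_field_derivative 3 * F1 s - c * F s) (at s)" by (rule DERIV_cong)
  qed
  then show ?thesis by blast
qed

lemma fam_c:
  fixes c r c1 c2 :: real
  assumes r: "r * r = 4 * c - 9"
  defines "F \<equiv> \<lambda>s. c1 * exp (3 / 2 * s) * cos (r / 2 * s) + c2 * exp (3 / 2 * s) * sin (r / 2 * s)"
  shows "\<exists>F1. \<forall>s. (F has_field_derivative F1 s) (at s) \<and> (F1 has_field_derivative 3 * F1 s - c * F s) (at s)"
proof -
  define F1 where "F1 s = exp (3 / 2 * s) * ((3/2 * c1 + r/2 * c2) * cos (r / 2 * s) + (3/2 * c2 - r/2 * c1) * sin (r / 2 * s))" for s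
  have "(F has_field_derivative F1 s) (at s) \<and> (F1 has_field_derivative 3 * F1 s - c * F s) (at s)" for s
  proof
    show "(F has_field_derivative F1 s) (at s)" unfolding F_def F1_def
      by (auto intro!: derivative_eq_intros simp: algebra_simps)
    have "(F1 has_field_derivative
       3/2 * exp (3 / 2 * s) * ((3/2 * c1 + r/2 * c2) * cos (r / 2 * s) + (3/2 * c2 - r/2 * c1) * sin (r / 2 * s))
       + exp (3 / 2 * s) * (r/2 * (- (3/2 * c1 + r/2 * c2) * sin (r / 2 * s) + (3/2 * c2 - r/2 * c1) * cos (r / 2 * s)))) (at s)"
      unfolding F1_def[abs_def] by (auto intro!: derivative_eq_intros simp: field_simps)
    moreover have "3/2 * exp (3 / 2 * s) * ((3/2 * c1 + r/2 * c2) * cos (r / 2 * s) + (3/2 * c2 - r/2 * c1) * sin (r / 2 * s))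
       + exp (3 / 2 * s) * (r/2 * (- (3/2 * c1 + r/2 * c2) * sin (r / 2 * s) + (3/2 * c2 - r/2 * c1) * cos (r / 2 * s)))
       = 3 * F1 s - c * F s"
    proof -
      have cc: "c = (r * r + 9) / 4" using r by simp
      show ?thesis unfolding F_def F1_def cc by (simp add: field_simps)
    qed
    ultimately show "(F1 has_field_derivative 3 * F1 s - c * F s) (at s)" by (rule DERIV_cong)
  qed
  then show ?thesis by blast
qed

lemma sf_ode:
  fixes z e S k c u U1 v w :: real
  assumes z: "z \<noteq> 0" and ez: "e + z\<^sup>2 > 0" and k: "k = 2 * z / (e + z\<^sup>2)"
    and c: "c = (S + 6) * (e + z\<^sup>2) / (4 * z\<^sup>2)" and u: "u > 0"
    and v: "v = k * U1 / u" and w: "w = k * ((3 * U1 - c * u) * u - U1 * U1) / (u * u)"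
  shows "- 2 * z * w - (e + z\<^sup>2) * v\<^sup>2 + 6 * z * v - 6 = S"
proof -
  define q where "q = e + z\<^sup>2"
  define X where "X = U1 / u"
  have q0: "q \<noteq> 0" using ez q_def by simp
  have v': "v = k * X" unfolding v X_def by simp
  have w': "w = k * (3 * X - c - X * X)" unfolding w X_def using u by (simp add: field_simps)
  have qk: "q * k * k = 2 * z * k" unfolding k q_def[symmetric] using q0 by (simp add: field_simps power2_eq_square)
  have zkc: "2 * z * k * c = S + 6" unfolding k c q_def[symmetric] using q0 z by (simp add: field_simps power2_eq_square)
  have "- 2 * z * w - (e + z\<^sup>2) * v\<^sup>2 + 6 * z * v - 6 = 2 * z * k * c - 6 + X * X * (2 * z * k - q * k * k)"
    unfolding v' w' q_def[symmetric] by (simp add: algebra_simps power2_eq_square)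
  also have "\<dots> = S" unfolding qk zkc by simp
  finally show ?thesis .
qed

lemma bwd_case:
  fixes \<phi> F F1 :: "real \<Rightarrow> real" and z e S :: real
  assumes oI: "open I" and z: "z \<noteq> 0" and e: "e \<ge> 0"
    and c: "c = (S + 6) * (e + z\<^sup>2) / (4 * z\<^sup>2)"
    and DF: "\<forall>s. (F has_field_derivative F1 s) (at s) \<and> (F1 has_field_derivative 3 * F1 s - c * F s) (at s)"
    and P: "\<forall>t\<in>I. F t > 0 \<and> \<phi> t = F t powr (2 * z / (e + z\<^sup>2))"
  shows "\<forall>t\<in>I. - 2 * z * dv \<phi> t - (e + z\<^sup>2) * (vv \<phi> t)\<^sup>2 + 6 * z * vv \<phi> t - 6 = S"
proof
  fix t assume t: "t \<in> I"
  have ez: "e + z\<^sup>2 > 0" using z e by (simp add: add_nonneg_pos)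
  have H: "\<forall>s\<in>I. \<phi> s = F s powr (2 * z / (e + z\<^sup>2)) \<and> F s > 0 \<and> (F has_field_derivative F1 s) (at s)
              \<and> (F1 has_field_derivative 3 * F1 s - c * F s) (at s)" using DF P by blast
  show "- 2 * z * dv \<phi> t - (e + z\<^sup>2) * (vv \<phi> t)\<^sup>2 + 6 * z * vv \<phi> t - 6 = S"
    by (rule sf_ode[OF z ez refl c _ vv_dv_powr(1)[OF oI t H] vv_dv_powr(2)[OF oI t H]]) (use P t in auto)
qed

lemma bwd_zeta:
  fixes \<phi> :: "real \<Rightarrow> real" and z e S :: real
  assumes oI: "open I" and z: "z \<noteq> 0" and e: "e \<ge> 0"
    and R: "(S + 6 < 9 * z\<^sup>2 / (e + z\<^sup>2) \<and>
            (\<exists>c1 c2. \<forall>t\<in>I.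
               let r = sqrt (9 - (S + 6) * (e + z\<^sup>2) / z\<^sup>2);
                   u = c1 * exp ((3 + r) / 2 * t) + c2 * exp ((3 - r) / 2 * t)
               in u > 0 \<and> \<phi> t = u powr (2 * z / (e + z\<^sup>2))))
          \<or> (S + 6 = 9 * z\<^sup>2 / (e + z\<^sup>2) \<and>
            (\<exists>c1 c2. \<forall>t\<in>I.
               let u = c1 * exp (3 / 2 * t) + c2 * t * exp (3 / 2 * t)
               in u > 0 \<and> \<phi> t = u powr (2 * z / (e + z\<^sup>2))))
          \<or> (S + 6 > 9 * z\<^sup>2 / (e + z\<^sup>2) \<and>
            (\<exists>c1 c2. \<forall>t\<in>I.
               let r = sqrt (-9 + (S + 6) * (e + z\<^sup>2) / z\<^sup>2);
                   u = c1 * exp (3 / 2 * t) * cos (r / 2 * t) + c2 * exp (3 / 2 * t) * sin (r / 2 * t)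
               in u > 0 \<and> \<phi> t = u powr (2 * z / (e + z\<^sup>2))))"
  shows "\<forall>t\<in>I. - 2 * z * dv \<phi> t - (e + z\<^sup>2) * (vv \<phi> t)\<^sup>2 + 6 * z * vv \<phi> t - 6 = S"
proof -
  have ez: "e + z\<^sup>2 > 0" using z e by (simp add: add_nonneg_pos)
  define c where "c = (S + 6) * (e + z\<^sup>2) / (4 * z\<^sup>2)"
  have c4: "4 * c = (S + 6) * (e + z\<^sup>2) / z\<^sup>2" unfolding c_def using z by (simp add: field_simps)
  have cmp: "(S + 6 < 9 * z\<^sup>2 / (e + z\<^sup>2)) = (4 * c < 9)"
       "(S + 6 = 9 * z\<^sup>2 / (e + z\<^sup>2)) = (4 * c = 9)"
       "(S + 6 > 9 * z\<^sup>2 / (e + z\<^sup>2)) = (4 * c > 9)"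
    unfolding c4 using z ez by (simp_all add: field_simps)
  from R show ?thesis
  proof (elim disjE conjE exE)
    fix c1 c2 assume lt: "S + 6 < 9 * z\<^sup>2 / (e + z\<^sup>2)" and h: "\<forall>t\<in>I.
               let r = sqrt (9 - (S + 6) * (e + z\<^sup>2) / z\<^sup>2);
                   u = c1 * exp ((3 + r) / 2 * t) + c2 * exp ((3 - r) / 2 * t)
               in u > 0 \<and> \<phi> t = u powr (2 * z / (e + z\<^sup>2))"
    define r where "r = sqrt (9 - (S + 6) * (e + z\<^sup>2) / z\<^sup>2)"
    have r: "r * r = 9 - 4 * c" unfolding r_def c4[symmetric] using lt cmp by simp
    obtain F1 where DF: "\<forall>s. ((\<lambda>s. c1 * exp ((3 + r) / 2 * s) + c2 * exp ((3 - r) / 2 * s)) has_field_derivative F1 s) (at s) \<and>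
       (F1 has_field_derivative 3 * F1 s - c * (c1 * exp ((3 + r) / 2 * s) + c2 * exp ((3 - r) / 2 * s))) (at s)"
      using fam_a[OF r, of c1 c2] by auto
    show ?thesis by (rule bwd_case[OF oI z e c_def DF]) (use h in \<open>simp add: Let_def r_def\<close>)
  next
    fix c1 c2 assume eq: "S + 6 = 9 * z\<^sup>2 / (e + z\<^sup>2)" and h: "\<forall>t\<in>I.
               let u = c1 * exp (3 / 2 * t) + c2 * t * exp (3 / 2 * t)
               in u > 0 \<and> \<phi> t = u powr (2 * z / (e + z\<^sup>2))"
    have c9: "4 * c = 9" using eq cmp by simp
    obtain F1 where DF: "\<forall>s. ((\<lambda>s. c1 * exp (3 / 2 * s) + c2 * s * exp (3 / 2 * s)) has_field_derivative F1 s) (at s) \<and>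
       (F1 has_field_derivative 3 * F1 s - c * (c1 * exp (3 / 2 * s) + c2 * s * exp (3 / 2 * s))) (at s)"
      using fam_b[OF c9, of c1 c2] by auto
    show ?thesis by (rule bwd_case[OF oI z e c_def DF]) (use h in \<open>simp add: Let_def\<close>)
  next
    fix c1 c2 assume gt: "S + 6 > 9 * z\<^sup>2 / (e + z\<^sup>2)" and h: "\<forall>t\<in>I.
               let r = sqrt (-9 + (S + 6) * (e + z\<^sup>2) / z\<^sup>2);
                   u = c1 * exp (3 / 2 * t) * cos (r / 2 * t) + c2 * exp (3 / 2 * t) * sin (r / 2 * t)
               in u > 0 \<and> \<phi> t = u powr (2 * z / (e + z\<^sup>2))"
    define r where "r = sqrt (-9 + (S + 6) * (e + z\<^sup>2) / z\<^sup>2)"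
    have r: "r * r = 4 * c - 9" unfolding r_def c4[symmetric] using gt cmp by simp
    obtain F1 where DF: "\<forall>s. ((\<lambda>s. c1 * exp (3 / 2 * s) * cos (r / 2 * s) + c2 * exp (3 / 2 * s) * sin (r / 2 * s)) has_field_derivative F1 s) (at s) \<and>
       (F1 has_field_derivative 3 * F1 s - c * (c1 * exp (3 / 2 * s) * cos (r / 2 * s) + c2 * exp (3 / 2 * s) * sin (r / 2 * s))) (at s)"
      using fam_c[OF r, of c1 c2] by auto
    show ?thesis by (rule bwd_case[OF oI z e c_def DF]) (use h in \<open>simp add: Let_def r_def\<close>)
  qed
qed

lemma bwd_zeta0:
  fixes \<phi> :: "real \<Rightarrow> real" and e S :: real
  assumes oI: "open I" and e: "e > 0" and pos: "\<forall>t\<in>I. \<phi> t > 0"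
    and R: "(S + 6 = 0 \<and> (\<exists>c. \<forall>t\<in>I. \<phi> t = c))
       \<or> (S + 6 < 0 \<and> (\<exists>c0. \<exists>\<sigma>\<in>{1, -1::real}. \<forall>t\<in>I. \<phi> t = c0 * exp (\<sigma> * sqrt (- (S + 6) / e) * t)))"
  shows "\<forall>t\<in>I. - e * (vv \<phi> t)\<^sup>2 - 6 = S"
proof
  fix t assume t: "t \<in> I"
  from R show "- e * (vv \<phi> t)\<^sup>2 - 6 = S"
  proof (elim disjE conjE exE bexE)
    fix c assume S: "S + 6 = 0" and h: "\<forall>t\<in>I. \<phi> t = c"
    have c: "c > 0" using h pos t by auto
    have H: "\<forall>s\<in>I. \<phi> s = (\<lambda>_. c) s powr 1 \<and> (\<lambda>_. c) s > 0 \<and> ((\<lambda>_. c) has_field_derivative (\<lambda>_. 0) s) (at s)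
              \<and> ((\<lambda>_. 0::real) has_field_derivative (\<lambda>_. 0) s) (at s)"
      using h c by auto
    have "vv \<phi> t = 1 * 0 / c" using vv_dv_powr(1)[OF oI t H] by simp
    then show ?thesis using S by simp
  next
    fix c0 \<sigma> assume S: "S + 6 < 0" and sg: "\<sigma> \<in> {1, -1}" and h: "\<forall>t\<in>I. \<phi> t = c0 * exp (\<sigma> * sqrt (- (S + 6) / e) * t)"
    define a where "a = sqrt (- (S + 6) / e)"
    have aa: "a\<^sup>2 = - (S + 6) / e" unfolding a_def using S e by simp
    have ss: "\<sigma> * \<sigma> = 1" using sg by auto
    define U where "U s = c0 * exp (\<sigma> * a * s)" for s
    have H: "\<forall>s\<in>I. \<phi> s = U s powr 1 \<and> U s > 0 \<and> (U has_field_derivative (\<sigma> * a * U s)) (at s)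
              \<and> ((\<lambda>s. \<sigma> * a * U s) has_field_derivative (\<sigma> * a * (\<sigma> * a * U s))) (at s)"
    proof
      fix s assume s: "s \<in> I"
      have us: "U s = \<phi> s" using h s unfolding U_def a_def by simp
      have d: "(U has_field_derivative (\<sigma> * a * U s)) (at s)" for s
        unfolding U_def[abs_def] by (auto intro!: derivative_eq_intros simp: algebra_simps)
      show "\<phi> s = U s powr 1 \<and> U s > 0 \<and> (U has_field_derivative (\<sigma> * a * U s)) (at s)
              \<and> ((\<lambda>s. \<sigma> * a * U s) has_field_derivative (\<sigma> * a * (\<sigma> * a * U s))) (at s)"
      proof (intro conjI d DERIV_cmult[OF d])
        show "U s > 0" using us pos s by simp
        then show "\<phi> s = U s powr 1" using us by simp
      qed
    qed
    have ut: "U t > 0" using H t by auto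
    have "vv \<phi> t = 1 * (\<sigma> * a * U t) / U t" using vv_dv_powr(1)[OF oI t H] by simp
    then have "vv \<phi> t = \<sigma> * a" using ut by simp
    then have "(vv \<phi> t)\<^sup>2 = a\<^sup>2" using ss by (simp add: power2_eq_square algebra_simps)
    then show ?thesis using aa e by simp
  qed
qed

theorem theorem4p29:
  fixes I :: "real set" and \<phi> :: "real \<Rightarrow> real" and p1 p2 p3 S :: real
  assumes I: "is_interval I" "open I" "I \<noteq> {}"
    and pos: "\<forall>t\<in>I. \<phi> t > 0"
    and smooth: "\<forall>n. \<forall>t\<in>I. ((deriv ^^ n) \<phi>) differentiable (at t)"
  defines "\<zeta> \<equiv> p1 + p2 + p3"
    and "\<eta> \<equiv> p1\<^sup>2 + p2\<^sup>2 + p3\<^sup>2"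
  shows
   "(\<forall>x::real^4. x $ 0 \<in> I \<longrightarrow> ssm_scalar (warped_metric \<phi> p1 p2 p3) dt_field x = S)
    \<longleftrightarrow>
    ((\<zeta> = 0 \<and> \<eta> = 0 \<and> S = -6)
     \<or> (\<zeta> = 0 \<and> \<eta> \<noteq> 0 \<and>
         ((S + 6 = 0 \<and> (\<exists>c. \<forall>t\<in>I. \<phi> t = c))
          \<or> (S + 6 < 0 \<and> (\<exists>c0. \<exists>\<sigma>\<in>{1, -1::real}.
                \<forall>t\<in>I. \<phi> t = c0 * exp (\<sigma> * sqrt (- (S + 6) / \<eta>) * t)))))
     \<or> (\<zeta> \<noteq> 0 \<and>
         ((S + 6 < 9 * \<zeta>\<^sup>2 / (\<eta> + \<zeta>\<^sup>2) \<and>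
            (\<exists>c1 c2. \<forall>t\<in>I.
               let r = sqrt (9 - (S + 6) * (\<eta> + \<zeta>\<^sup>2) / \<zeta>\<^sup>2);
                   u = c1 * exp ((3 + r) / 2 * t) + c2 * exp ((3 - r) / 2 * t)
               in u > 0 \<and> \<phi> t = u powr (2 * \<zeta> / (\<eta> + \<zeta>\<^sup>2))))
          \<or> (S + 6 = 9 * \<zeta>\<^sup>2 / (\<eta> + \<zeta>\<^sup>2) \<and>
            (\<exists>c1 c2. \<forall>t\<in>I.
               let u = c1 * exp (3 / 2 * t) + c2 * t * exp (3 / 2 * t)
               in u > 0 \<and> \<phi> t = u powr (2 * \<zeta> / (\<eta> + \<zeta>\<^sup>2))))
          \<or> (S + 6 > 9 * \<zeta>\<^sup>2 / (\<eta> + \<zeta>\<^sup>2) \<and>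
            (\<exists>c1 c2. \<forall>t\<in>I.
               let r = sqrt (-9 + (S + 6) * (\<eta> + \<zeta>\<^sup>2) / \<zeta>\<^sup>2);
                   u = c1 * exp (3 / 2 * t) * cos (r / 2 * t) + c2 * exp (3 / 2 * t) * sin (r / 2 * t)
               in u > 0 \<and> \<phi> t = u powr (2 * \<zeta> / (\<eta> + \<zeta>\<^sup>2)))))))"
proof -
  have iI: "is_interval I" and oI: "open I" using I by auto
  obtain t0 where t0: "t0 \<in> I" using I(3) by blast
  have d1: "\<forall>s\<in>I. (\<phi> has_field_derivative deriv \<phi> s) (at s)"
  proof
    fix s assume "s \<in> I"
    then have "((deriv ^^ 0) \<phi>) differentiable (at s)" using smooth by blast
    then have "\<phi> differentiable (at s)" by simp
    then show "(\<phi> has_field_derivative deriv \<phi> s) (at s)" by (simp add: DERIV_deriv_iff_real_differentiable)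
  qed
  have D2: "\<forall>s\<in>I. (deriv \<phi> has_field_derivative deriv (deriv \<phi>) s) (at s)"
  proof
    fix s assume "s \<in> I"
    then have "((deriv ^^ Suc 0) \<phi>) differentiable (at s)" using smooth by blast
    then have "deriv \<phi> differentiable (at s)" by simp
    then show "(deriv \<phi> has_field_derivative deriv (deriv \<phi>) s) (at s)" by (simp add: DERIV_deriv_iff_real_differentiable)
  qed
  have H: "\<forall>s\<in>I. \<phi> s > 0 \<and> (\<phi> has_field_derivative deriv \<phi> s) (at s)" using pos d1 by blast
  have sc: "ssm_scalar (warped_metric \<phi> p1 p2 p3) dt_field x =
     - 2 * \<zeta> * dv \<phi> (x $ 0) - (\<eta> + \<zeta>\<^sup>2) * (vv \<phi> (x $ 0))\<^sup>2 + 6 * \<zeta> * vv \<phi> (x $ 0) - 6"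
    if "x $ 0 \<in> I" for x
    using scalar_expl[OF oI that H] D2 that unfolding \<zeta>_def \<eta>_def by simp
  have LHS: "(\<forall>x::real^4. x $ 0 \<in> I \<longrightarrow> ssm_scalar (warped_metric \<phi> p1 p2 p3) dt_field x = S)
     \<longleftrightarrow> (\<forall>t\<in>I. - 2 * \<zeta> * dv \<phi> t - (\<eta> + \<zeta>\<^sup>2) * (vv \<phi> t)\<^sup>2 + 6 * \<zeta> * vv \<phi> t - 6 = S)"
  proof
    assume A: "\<forall>x::real^4. x $ 0 \<in> I \<longrightarrow> ssm_scalar (warped_metric \<phi> p1 p2 p3) dt_field x = S"
    show "\<forall>t\<in>I. - 2 * \<zeta> * dv \<phi> t - (\<eta> + \<zeta>\<^sup>2) * (vv \<phi> t)\<^sup>2 + 6 * \<zeta> * vv \<phi> t - 6 = S"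
    proof
      fix t assume t: "t \<in> I"
      then have "(T t) $ 0 \<in> I" by simp
      from A[rule_format, OF this] sc[OF this] show "- 2 * \<zeta> * dv \<phi> t - (\<eta> + \<zeta>\<^sup>2) * (vv \<phi> t)\<^sup>2 + 6 * \<zeta> * vv \<phi> t - 6 = S"
        by simp
    qed
  next
    assume B: "\<forall>t\<in>I. - 2 * \<zeta> * dv \<phi> t - (\<eta> + \<zeta>\<^sup>2) * (vv \<phi> t)\<^sup>2 + 6 * \<zeta> * vv \<phi> t - 6 = S"
    show "\<forall>x::real^4. x $ 0 \<in> I \<longrightarrow> ssm_scalar (warped_metric \<phi> p1 p2 p3) dt_field x = S"
      using B sc by auto
  qed
  have e0: "\<eta> \<ge> 0" unfolding \<eta>_def by simp
  show ?thesis unfolding LHS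
  proof
    assume SS: "\<forall>t\<in>I. - 2 * \<zeta> * dv \<phi> t - (\<eta> + \<zeta>\<^sup>2) * (vv \<phi> t)\<^sup>2 + 6 * \<zeta> * vv \<phi> t - 6 = S"
    show "((\<zeta> = 0 \<and> \<eta> = 0 \<and> S = -6)
     \<or> (\<zeta> = 0 \<and> \<eta> \<noteq> 0 \<and>
         ((S + 6 = 0 \<and> (\<exists>c. \<forall>t\<in>I. \<phi> t = c))
          \<or> (S + 6 < 0 \<and> (\<exists>c0. \<exists>\<sigma>\<in>{1, -1::real}.
                \<forall>t\<in>I. \<phi> t = c0 * exp (\<sigma> * sqrt (- (S + 6) / \<eta>) * t)))))
     \<or> (\<zeta> \<noteq> 0 \<and>
         ((S + 6 < 9 * \<zeta>\<^sup>2 / (\<eta> + \<zeta>\<^sup>2) \<and>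
            (\<exists>c1 c2. \<forall>t\<in>I.
               let r = sqrt (9 - (S + 6) * (\<eta> + \<zeta>\<^sup>2) / \<zeta>\<^sup>2);
                   u = c1 * exp ((3 + r) / 2 * t) + c2 * exp ((3 - r) / 2 * t)
               in u > 0 \<and> \<phi> t = u powr (2 * \<zeta> / (\<eta> + \<zeta>\<^sup>2))))
          \<or> (S + 6 = 9 * \<zeta>\<^sup>2 / (\<eta> + \<zeta>\<^sup>2) \<and>
            (\<exists>c1 c2. \<forall>t\<in>I.
               let u = c1 * exp (3 / 2 * t) + c2 * t * exp (3 / 2 * t)
               in u > 0 \<and> \<phi> t = u powr (2 * \<zeta> / (\<eta> + \<zeta>\<^sup>2))))
          \<or> (S + 6 > 9 * \<zeta>\<^sup>2 / (\<eta> + \<zeta>\<^sup>2) \<and>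
            (\<exists>c1 c2. \<forall>t\<in>I.
               let r = sqrt (-9 + (S + 6) * (\<eta> + \<zeta>\<^sup>2) / \<zeta>\<^sup>2);
                   u = c1 * exp (3 / 2 * t) * cos (r / 2 * t) + c2 * exp (3 / 2 * t) * sin (r / 2 * t)
               in u > 0 \<and> \<phi> t = u powr (2 * \<zeta> / (\<eta> + \<zeta>\<^sup>2)))))))"
    proof (cases "\<zeta> = 0")
      case z: True
      show ?thesis
      proof (cases "\<eta> = 0")
        case True
        then have "S = -6" using SS t0 z by auto
        then show ?thesis using z True by blast
      next
        case False
        then have ep: "\<eta> > 0" using e0 by simp
        have SS0: "\<forall>t\<in>I. - \<eta> * (vv \<phi> t)\<^sup>2 - 6 = S" using SS z by simp
        from fwd_zeta0[OF iI oI t0 H D2 SS0 ep] show ?thesis using z False by blast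
      qed
    next
      case False
      from fwd_zeta[OF iI oI t0 H D2 SS False e0] show ?thesis using False by blast
    qed
  next
    assume R: "((\<zeta> = 0 \<and> \<eta> = 0 \<and> S = -6)
     \<or> (\<zeta> = 0 \<and> \<eta> \<noteq> 0 \<and>
         ((S + 6 = 0 \<and> (\<exists>c. \<forall>t\<in>I. \<phi> t = c))
          \<or> (S + 6 < 0 \<and> (\<exists>c0. \<exists>\<sigma>\<in>{1, -1::real}.
                \<forall>t\<in>I. \<phi> t = c0 * exp (\<sigma> * sqrt (- (S + 6) / \<eta>) * t)))))
     \<or> (\<zeta> \<noteq> 0 \<and>
         ((S + 6 < 9 * \<zeta>\<^sup>2 / (\<eta> + \<zeta>\<^sup>2) \<and>
            (\<exists>c1 c2. \<forall>t\<in>I.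
               let r = sqrt (9 - (S + 6) * (\<eta> + \<zeta>\<^sup>2) / \<zeta>\<^sup>2);
                   u = c1 * exp ((3 + r) / 2 * t) + c2 * exp ((3 - r) / 2 * t)
               in u > 0 \<and> \<phi> t = u powr (2 * \<zeta> / (\<eta> + \<zeta>\<^sup>2))))
          \<or> (S + 6 = 9 * \<zeta>\<^sup>2 / (\<eta> + \<zeta>\<^sup>2) \<and>
            (\<exists>c1 c2. \<forall>t\<in>I.
               let u = c1 * exp (3 / 2 * t) + c2 * t * exp (3 / 2 * t)
               in u > 0 \<and> \<phi> t = u powr (2 * \<zeta> / (\<eta> + \<zeta>\<^sup>2))))
          \<or> (S + 6 > 9 * \<zeta>\<^sup>2 / (\<eta> + \<zeta>\<^sup>2) \<and>
            (\<exists>c1 c2. \<forall>t\<in>I.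
               let r = sqrt (-9 + (S + 6) * (\<eta> + \<zeta>\<^sup>2) / \<zeta>\<^sup>2);
                   u = c1 * exp (3 / 2 * t) * cos (r / 2 * t) + c2 * exp (3 / 2 * t) * sin (r / 2 * t)
               in u > 0 \<and> \<phi> t = u powr (2 * \<zeta> / (\<eta> + \<zeta>\<^sup>2)))))))"
    show "\<forall>t\<in>I. - 2 * \<zeta> * dv \<phi> t - (\<eta> + \<zeta>\<^sup>2) * (vv \<phi> t)\<^sup>2 + 6 * \<zeta> * vv \<phi> t - 6 = S"
      using R
    proof (rule disjE)
      assume "\<zeta> = 0 \<and> \<eta> = 0 \<and> S = -6"
      then show ?thesis by simp
    next
      assume R23: "(\<zeta> = 0 \<and> \<eta> \<noteq> 0 \<and>
         ((S + 6 = 0 \<and> (\<exists>c. \<forall>t\<in>I. \<phi> t = c))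
          \<or> (S + 6 < 0 \<and> (\<exists>c0. \<exists>\<sigma>\<in>{1, -1::real}.
                \<forall>t\<in>I. \<phi> t = c0 * exp (\<sigma> * sqrt (- (S + 6) / \<eta>) * t))))) \<or> (\<zeta> \<noteq> 0 \<and>
         ((S + 6 < 9 * \<zeta>\<^sup>2 / (\<eta> + \<zeta>\<^sup>2) \<and>
            (\<exists>c1 c2. \<forall>t\<in>I.
               let r = sqrt (9 - (S + 6) * (\<eta> + \<zeta>\<^sup>2) / \<zeta>\<^sup>2);
                   u = c1 * exp ((3 + r) / 2 * t) + c2 * exp ((3 - r) / 2 * t)
               in u > 0 \<and> \<phi> t = u powr (2 * \<zeta> / (\<eta> + \<zeta>\<^sup>2))))
          \<or> (S + 6 = 9 * \<zeta>\<^sup>2 / (\<eta> + \<zeta>\<^sup>2) \<and>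
            (\<exists>c1 c2. \<forall>t\<in>I.
               let u = c1 * exp (3 / 2 * t) + c2 * t * exp (3 / 2 * t)
               in u > 0 \<and> \<phi> t = u powr (2 * \<zeta> / (\<eta> + \<zeta>\<^sup>2))))
          \<or> (S + 6 > 9 * \<zeta>\<^sup>2 / (\<eta> + \<zeta>\<^sup>2) \<and>
            (\<exists>c1 c2. \<forall>t\<in>I.
               let r = sqrt (-9 + (S + 6) * (\<eta> + \<zeta>\<^sup>2) / \<zeta>\<^sup>2);
                   u = c1 * exp (3 / 2 * t) * cos (r / 2 * t) + c2 * exp (3 / 2 * t) * sin (r / 2 * t)
               in u > 0 \<and> \<phi> t = u powr (2 * \<zeta> / (\<eta> + \<zeta>\<^sup>2))))))"
      then show ?thesis
      proof (rule disjE)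
        assume RB: "(\<zeta> = 0 \<and> \<eta> \<noteq> 0 \<and>
         ((S + 6 = 0 \<and> (\<exists>c. \<forall>t\<in>I. \<phi> t = c))
          \<or> (S + 6 < 0 \<and> (\<exists>c0. \<exists>\<sigma>\<in>{1, -1::real}.
                \<forall>t\<in>I. \<phi> t = c0 * exp (\<sigma> * sqrt (- (S + 6) / \<eta>) * t)))))"
        then have z: "\<zeta> = 0" and ne: "\<eta> \<noteq> 0" and R0: "
         ((S + 6 = 0 \<and> (\<exists>c. \<forall>t\<in>I. \<phi> t = c))
          \<or> (S + 6 < 0 \<and> (\<exists>c0. \<exists>\<sigma>\<in>{1, -1::real}.
                \<forall>t\<in>I. \<phi> t = c0 * exp (\<sigma> * sqrt (- (S + 6) / \<eta>) * t))))" by blast+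
        have ep: "\<eta> > 0" using e0 ne by simp
        from bwd_zeta0[OF oI ep pos R0] show ?thesis using z by simp
      next
        assume RC: "(\<zeta> \<noteq> 0 \<and>
         ((S + 6 < 9 * \<zeta>\<^sup>2 / (\<eta> + \<zeta>\<^sup>2) \<and>
            (\<exists>c1 c2. \<forall>t\<in>I.
               let r = sqrt (9 - (S + 6) * (\<eta> + \<zeta>\<^sup>2) / \<zeta>\<^sup>2);
                   u = c1 * exp ((3 + r) / 2 * t) + c2 * exp ((3 - r) / 2 * t)
               in u > 0 \<and> \<phi> t = u powr (2 * \<zeta> / (\<eta> + \<zeta>\<^sup>2))))
          \<or> (S + 6 = 9 * \<zeta>\<^sup>2 / (\<eta> + \<zeta>\<^sup>2) \<and>
            (\<exists>c1 c2. \<forall>t\<in>I.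
               let u = c1 * exp (3 / 2 * t) + c2 * t * exp (3 / 2 * t)
               in u > 0 \<and> \<phi> t = u powr (2 * \<zeta> / (\<eta> + \<zeta>\<^sup>2))))
          \<or> (S + 6 > 9 * \<zeta>\<^sup>2 / (\<eta> + \<zeta>\<^sup>2) \<and>
            (\<exists>c1 c2. \<forall>t\<in>I.
               let r = sqrt (-9 + (S + 6) * (\<eta> + \<zeta>\<^sup>2) / \<zeta>\<^sup>2);
                   u = c1 * exp (3 / 2 * t) * cos (r / 2 * t) + c2 * exp (3 / 2 * t) * sin (r / 2 * t)
               in u > 0 \<and> \<phi> t = u powr (2 * \<zeta> / (\<eta> + \<zeta>\<^sup>2))))))"
        then have z: "\<zeta> \<noteq> 0" and R3: "
         ((S + 6 < 9 * \<zeta>\<^sup>2 / (\<eta> + \<zeta>\<^sup>2) \<and>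
            (\<exists>c1 c2. \<forall>t\<in>I.
               let r = sqrt (9 - (S + 6) * (\<eta> + \<zeta>\<^sup>2) / \<zeta>\<^sup>2);
                   u = c1 * exp ((3 + r) / 2 * t) + c2 * exp ((3 - r) / 2 * t)
               in u > 0 \<and> \<phi> t = u powr (2 * \<zeta> / (\<eta> + \<zeta>\<^sup>2))))
          \<or> (S + 6 = 9 * \<zeta>\<^sup>2 / (\<eta> + \<zeta>\<^sup>2) \<and>
            (\<exists>c1 c2. \<forall>t\<in>I.
               let u = c1 * exp (3 / 2 * t) + c2 * t * exp (3 / 2 * t)
               in u > 0 \<and> \<phi> t = u powr (2 * \<zeta> / (\<eta> + \<zeta>\<^sup>2))))
          \<or> (S + 6 > 9 * \<zeta>\<^sup>2 / (\<eta> + \<zeta>\<^sup>2) \<and>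
            (\<exists>c1 c2. \<forall>t\<in>I.
               let r = sqrt (-9 + (S + 6) * (\<eta> + \<zeta>\<^sup>2) / \<zeta>\<^sup>2);
                   u = c1 * exp (3 / 2 * t) * cos (r / 2 * t) + c2 * exp (3 / 2 * t) * sin (r / 2 * t)
               in u > 0 \<and> \<phi> t = u powr (2 * \<zeta> / (\<eta> + \<zeta>\<^sup>2)))))" by blast+
        show ?thesis by (rule bwd_zeta[OF oI z e0 R3])
      qed
    qed
  qed
qed

end
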